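(* Let $\Omega\subset\mathbb{R}^2$ be a bounded domain and $X\subset\overline{\Omega}$ a finite set with $X\setminus\partial\Omega\subset\mathrm{int}(\mathrm{conv}(X\cap\partial\Omega))$. Then $(\mathcal{P}_X)$ and $(\mathcal{P}_X^* )$ are mutually dual conic quadratic problems, both admit solutions, and $$\mathcal{Z}_X:=\min\mathcal{P}_X=\max\mathcal{P}_X^*<\infty.$$ Moreover, for $(\mathbf{s},\mathbf{q})\in\mathbb{R}^m_+\times\mathbb{R}^m$ and $(\mathbf{u}_1,\mathbf{u}_2,\mathbf{w})\in(\mathbb{R}^n)^3$: $(\mathbf{s},\mathbf{q})$ (completed by some $\mathbf{r}$) solves $(\mathcal{P}_X)$ and $(\mathbf{u}_1,\mathbf{u}_2,\mathbf{w})$ (completed by some $\mathbf{t}_1,\mathbf{t}_2,\mathbf{t}_3$) solves $(\mathcal{P}_X^* )$ if and only if: (i) $\frac14((\mathbf{D}\mathbf{w})_k)^2/l_k+(\mathbf{B}_1\mathbf{u}_1+\mathbf{B}_2\mathbf{u}_2)_k\le l_k$ for every $k$; (ii) $\mathbf{B}_1^\top\mathbf{s}=\mathbf{0}$, $\mathbf{B}_2^\top\mathbf{s}=\mathbf{0}$, $\mathbf{D}^\top\mathbf{q}=\mathbf{f}$; (iii) $\frac14((\mathbf{D}\mathbf{w})_k)^2/l_k+(\mathbf{B}_1\mathbf{u}_1+\mathbf{B}_2\mathbf{u}_2)_k=l_k$ for each $k$ with $s_k\ne0$; (iv) $q_k=\frac12 s_k(\mathbf{D}\mathbf{w})_k/l_k$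 for every $k$.
   Context: Discrete setting: let $\bar n=\#X$, $n=\#(X\setminus\partial\Omega)$, fix an enumeration $\chi:\{1,\dots,n\}\to X\setminus\partial\Omega$, let $m=\bar n(\bar n-1)/2$ and fix an enumeration $k\mapsto\{\chi_-(k),\chi_+(k)\}$ of all unordered pairs of distinct points of $X$. A discrete load is a signed measure $f_X$ supported on $X$; $\mathbf{f}\in\mathbb{R}^n$, $f_i=f_X(\{\chi(i)\})$. $\mathbf{l}\in\mathbb{R}^m$, $l_k=|\chi_+(k)-\chi_-(k)|$. Vectors $\mathbf{u}_1,\mathbf{u}_2,\mathbf{w}\in\mathbb{R}^n$ are identified with $u:X\to\mathbb{R}^2$, $w:X\to\mathbb{R}$ vanishing on $X\cap\partial\Omega$ via $(u_{1;i},u_{2;i})=u(\chi(i))$ (components in a fixed Cartesian basis) and $w_i=w(\chi(i))$. Matrices $\mathbf{B}_1,\mathbf{B}_2,\mathbf{D}\in\mathbb{R}^{m\times n}$ are defined by $(\mathbf{B}_1\mathbf{u}_1+\mathbf{B}_2\mathbf{u}_2)_k=(u(\chi_+(k))-u(\chi_-(k)))\cdot\frac{\chi_+(k)-\chi_-(k)}{l_k}$ and $(\mathbf{D}\mathbf{w})_k=w(\chi_+(k))-w(\chi_-(k))$. Rotated cone $\mathrm{K}=\{(t_1,t_2,t_3)\in\mathbb{R}^3:t_1,t_2\ge0,\ 2t_1t_2\ge t_3^2\}$; $(\mathbf{a},\mathbf{b},\mathbf{c})\in\mathrm{K}^m$ means $(a_k,b_k,c_k)\in\mathrm{K}$ for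 all $k$. $(\mathcal{P}_X)$: $\inf\{\mathbf{l}^\top\mathbf{s}+2\mathbf{l}^\top\mathbf{r}:\mathbf{s},\mathbf{r}\in\mathbb{R}^m_+,\mathbf{q}\in\mathbb{R}^m,\ \mathbf{B}_1^\top\mathbf{s}=\mathbf{0},\mathbf{B}_2^\top\mathbf{s}=\mathbf{0},\mathbf{D}^\top\mathbf{q}=\mathbf{f},\ (\mathbf{r},\mathbf{s},\mathbf{q})\in\mathrm{K}^m\}$. $(\mathcal{P}_X^* )$: $\sup\{\mathbf{f}^\top\mathbf{w}:\mathbf{u}_1,\mathbf{u}_2,\mathbf{w}\in\mathbb{R}^n,\ \mathbf{t}_1,\mathbf{t}_2\in\mathbb{R}^m_+,\mathbf{t}_3\in\mathbb{R}^m,\ \mathbf{t}_2+\mathbf{B}_1\mathbf{u}_1+\mathbf{B}_2\mathbf{u}_2=\mathbf{l},\ \mathbf{t}_3+\mathbf{D}\mathbf{w}=\mathbf{0},\ \mathbf{t}_1=2\mathbf{l},\ (\mathbf{t}_1,\mathbf{t}_2,\mathbf{t}_3)\in\mathrm{K}^m\}$. *)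

theory Defs
  imports "HOL-Analysis.Analysis"
begin

text \<open>Points of the plane are of type real^2. Vectors in R^n / R^m are
  functions nat => real of which only the indices < n (resp. < m) are used.
  chi enumerates the interior points X - frontier Omega (index i < n);
  cm, cp give for k < m the (oriented) pair chi_-(k), chi_+(k).\<close>

definition len :: "(nat \<Rightarrow> real^2) \<Rightarrow> (nat \<Rightarrow> real^2) \<Rightarrow> nat \<Rightarrow> real" where
  "len cm cp k = norm (cp k - cm k)"

definition Dmat :: "(nat \<Rightarrow> real^2) \<Rightarrow> (nat \<Rightarrow> real^2) \<Rightarrow> (nat \<Rightarrow> real^2) \<Rightarrow> nat \<Rightarrow> nat \<Rightarrow> real" where
  "Dmat chi cm cp k i = (if chi i = cp k then 1 else 0) - (if chi i = cm k then 1 else 0)"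

definition B1mat :: "(nat \<Rightarrow> real^2) \<Rightarrow> (nat \<Rightarrow> real^2) \<Rightarrow> (nat \<Rightarrow> real^2) \<Rightarrow> nat \<Rightarrow> nat \<Rightarrow> real" where
  "B1mat chi cm cp k i = Dmat chi cm cp k i * (cp k $ 1 - cm k $ 1) / len cm cp k"

definition B2mat :: "(nat \<Rightarrow> real^2) \<Rightarrow> (nat \<Rightarrow> real^2) \<Rightarrow> (nat \<Rightarrow> real^2) \<Rightarrow> nat \<Rightarrow> nat \<Rightarrow> real" where
  "B2mat chi cm cp k i = Dmat chi cm cp k i * (cp k $ 2 - cm k $ 2) / len cm cp k"

definition mv :: "(nat \<Rightarrow> nat \<Rightarrow> real) \<Rightarrow> nat \<Rightarrow> (nat \<Rightarrow> real) \<Rightarrow> nat \<Rightarrow> real" where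
  "mv M n v k = (\<Sum>i<n. M k i * v i)"

definition tmv :: "(nat \<Rightarrow> nat \<Rightarrow> real) \<Rightarrow> nat \<Rightarrow> (nat \<Rightarrow> real) \<Rightarrow> nat \<Rightarrow> real" where
  "tmv M m s i = (\<Sum>k<m. M k i * s k)"

definition inK :: "real \<Rightarrow> real \<Rightarrow> real \<Rightarrow> bool" where
  "inK t1 t2 t3 \<longleftrightarrow> t1 \<ge> 0 \<and> t2 \<ge> 0 \<and> 2 * t1 * t2 \<ge> t3\<^sup>2"

definition primal_feas :: "nat \<Rightarrow> nat \<Rightarrow> (nat \<Rightarrow> real^2) \<Rightarrow> (nat \<Rightarrow> real^2) \<Rightarrow> (nat \<Rightarrow> real^2)
    \<Rightarrow> (nat \<Rightarrow> real) \<Rightarrow> (nat \<Rightarrow> real) \<Rightarrow> (nat \<Rightarrow> real) \<Rightarrow> (nat \<Rightarrow> real) \<Rightarrow> bool" where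
  "primal_feas n m chi cm cp f s r q \<longleftrightarrow>
     (\<forall>k<m. s k \<ge> 0 \<and> r k \<ge> 0 \<and> inK (r k) (s k) (q k)) \<and>
     (\<forall>i<n. tmv (B1mat chi cm cp) m s i = 0 \<and> tmv (B2mat chi cm cp) m s i = 0 \<and>
            tmv (Dmat chi cm cp) m q i = f i)"

definition primal_obj :: "nat \<Rightarrow> (nat \<Rightarrow> real^2) \<Rightarrow> (nat \<Rightarrow> real^2) \<Rightarrow> (nat \<Rightarrow> real) \<Rightarrow> (nat \<Rightarrow> real) \<Rightarrow> real" where
  "primal_obj m cm cp s r = (\<Sum>k<m. len cm cp k * s k) + 2 * (\<Sum>k<m. len cm cp k * r k)"

definition primal_sol :: "nat \<Rightarrow> nat \<Rightarrow> (nat \<Rightarrow> real^2) \<Rightarrow> (nat \<Rightarrow> real^2) \<Rightarrow> (nat \<Rightarrow> real^2)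
    \<Rightarrow> (nat \<Rightarrow> real) \<Rightarrow> (nat \<Rightarrow> real) \<Rightarrow> (nat \<Rightarrow> real) \<Rightarrow> (nat \<Rightarrow> real) \<Rightarrow> bool" where
  "primal_sol n m chi cm cp f s r q \<longleftrightarrow> primal_feas n m chi cm cp f s r q \<and>
     (\<forall>s' r' q'. primal_feas n m chi cm cp f s' r' q' \<longrightarrow> primal_obj m cm cp s r \<le> primal_obj m cm cp s' r')"

definition dual_feas :: "nat \<Rightarrow> nat \<Rightarrow> (nat \<Rightarrow> real^2) \<Rightarrow> (nat \<Rightarrow> real^2) \<Rightarrow> (nat \<Rightarrow> real^2)
    \<Rightarrow> (nat \<Rightarrow> real) \<Rightarrow> (nat \<Rightarrow> real) \<Rightarrow> (nat \<Rightarrow> real)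
    \<Rightarrow> (nat \<Rightarrow> real) \<Rightarrow> (nat \<Rightarrow> real) \<Rightarrow> (nat \<Rightarrow> real) \<Rightarrow> bool" where
  "dual_feas n m chi cm cp u1 u2 w t1 t2 t3 \<longleftrightarrow>
     (\<forall>k<m. t1 k \<ge> 0 \<and> t2 k \<ge> 0 \<and>
        t2 k + mv (B1mat chi cm cp) n u1 k + mv (B2mat chi cm cp) n u2 k = len cm cp k \<and>
        t3 k + mv (Dmat chi cm cp) n w k = 0 \<and>
        t1 k = 2 * len cm cp k \<and>
        inK (t1 k) (t2 k) (t3 k))"

definition dual_obj :: "nat \<Rightarrow> (nat \<Rightarrow> real) \<Rightarrow> (nat \<Rightarrow> real) \<Rightarrow> real" where
  "dual_obj n f w = (\<Sum>i<n. f i * w i)"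

definition dual_sol :: "nat \<Rightarrow> nat \<Rightarrow> (nat \<Rightarrow> real^2) \<Rightarrow> (nat \<Rightarrow> real^2) \<Rightarrow> (nat \<Rightarrow> real^2)
    \<Rightarrow> (nat \<Rightarrow> real) \<Rightarrow> (nat \<Rightarrow> real) \<Rightarrow> (nat \<Rightarrow> real) \<Rightarrow> (nat \<Rightarrow> real)
    \<Rightarrow> (nat \<Rightarrow> real) \<Rightarrow> (nat \<Rightarrow> real) \<Rightarrow> (nat \<Rightarrow> real) \<Rightarrow> bool" where
  "dual_sol n m chi cm cp f u1 u2 w t1 t2 t3 \<longleftrightarrow> dual_feas n m chi cm cp u1 u2 w t1 t2 t3 \<and>
     (\<forall>u1' u2' w' t1' t2' t3'. dual_feas n m chi cm cp u1' u2' w' t1' t2' t3' \<longrightarrow>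
         dual_obj n f w' \<le> dual_obj n f w)"

end

theory Submission
  imports Defs
begin

lemma mv_upd: "i < n \<Longrightarrow> mv M n (v(i := v i + t)) k = mv M n v k + t * M k i"
proof -
  assume i: "i < n"
  have "mv M n (v(i := v i + t)) k = (\<Sum>j<n. M k j * v j + (if j = i then M k i * t else 0))"
    unfolding mv_def by (rule sum.cong) (auto simp: algebra_simps)
  also have "\<dots> = mv M n v k + t * M k i"
    using i by (simp add: sum.distrib mv_def)
  finally show ?thesis .
qed

lemma mv_zero[simp]: "mv M n (\<lambda>_. 0) k = 0"
  by (simp add: mv_def)

lemma mv_abs_le:
  assumes "\<forall>i<n. \<bar>v i\<bar> \<le> R"
  shows "\<bar>mv M n v k\<bar> \<le> (\<Sum>i<n. \<bar>M k i\<bar>) * R"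
proof -
  have "\<bar>mv M n v k\<bar> \<le> (\<Sum>i<n. \<bar>M k i * v i\<bar>)"
    unfolding mv_def by (rule sum_abs)
  also have "\<dots> \<le> (\<Sum>i<n. \<bar>M k i\<bar> * R)"
    by (rule sum_mono) (use assms in \<open>auto simp: abs_mult intro: mult_left_mono\<close>)
  finally show ?thesis by (simp add: sum_distrib_right)
qed

lemma tendsto_mv:
  assumes "\<forall>i<n. ((\<lambda>j. v j i) \<longlongrightarrow> a i) F"
  shows "((\<lambda>j. mv M n (v j) k) \<longlongrightarrow> mv M n a k) F"
  unfolding mv_def using assms by (auto intro!: tendsto_intros)

lemma tendsto_tmv:
  assumes "\<forall>i<m. ((\<lambda>j. v j i) \<longlongrightarrow> a i) F"
  shows "((\<lambda>j. tmv M m (v j) k) \<longlongrightarrow> tmv M m a k) F"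
  unfolding tmv_def using assms by (auto intro!: tendsto_intros)

lemma bounded_subseq:
  fixes x :: "nat \<Rightarrow> nat \<Rightarrow> real"
  assumes "\<forall>j. \<forall>i<N. \<bar>x j i\<bar> \<le> B"
  shows "\<exists>r. strict_mono r \<and> (\<forall>i<N. \<exists>a. (\<lambda>j. x (r j) i) \<longlonglongrightarrow> a)"
  using assms
proof (induction N)
  case 0
  then show ?case by (auto intro: strict_mono_id)
next
  case (Suc N)
  then obtain r where r: "strict_mono r" "\<forall>i<N. \<exists>a. (\<lambda>j. x (r j) i) \<longlonglongrightarrow> a" by auto
  have "bounded (range (\<lambda>j. x (r j) N))"
    using Suc.prems by (auto simp: bounded_iff intro!: exI[of _ B])
  then obtain a r' where r': "strict_mono r'" "((\<lambda>j. x (r j) N) \<circ> r') \<longlonglongrightarrow> a"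
    using bounded_imp_convergent_subsequence by blast
  have "strict_mono (\<lambda>j. r (r' j))" using strict_mono_compose[OF r(1) r'(1)] .
  moreover have "\<forall>i<Suc N. \<exists>a. (\<lambda>j. x (r (r' j)) i) \<longlonglongrightarrow> a"
  proof (intro allI impI)
    fix i assume "i < Suc N"
    then consider "i < N" | "i = N" by linarith
    then show "\<exists>a. (\<lambda>j. x (r (r' j)) i) \<longlonglongrightarrow> a"
    proof cases
      case 1
      then obtain b where "(\<lambda>j. x (r j) i) \<longlonglongrightarrow> b" using r by auto
      from LIMSEQ_subseq_LIMSEQ[OF this r'(1)] show ?thesis by (auto simp: o_def)
    next
      case 2 then show ?thesis using r'(2) by (auto simp: o_def)
    qed
  qed
  ultimately show ?case by blast
qed

lemma stat1:
  fixes E a b :: "nat \<Rightarrow> real" and F \<mu> :: real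
  assumes E: "\<forall>k<m. E k > 0"
    and mx: "\<forall>t. (\<forall>k<m. E k - (a k * t + b k * t\<^sup>2) > 0) \<longrightarrow>
          F * t + \<mu> * (\<Sum>k<m. ln (E k - (a k * t + b k * t\<^sup>2))) \<le> \<mu> * (\<Sum>k<m. ln (E k))"
  shows "F - \<mu> * (\<Sum>k<m. a k / E k) = 0"
proof -
  define H where "H = (\<lambda>t. F * t + \<mu> * (\<Sum>k<m. ln (E k - (a k * t + b k * t\<^sup>2))))"
  have dk: "((\<lambda>t. ln (E k - (a k * t + b k * t\<^sup>2))) has_real_derivative (- a k / E k)) (at 0)"
    if k: "k < m" for k
  proof -
    have p: "((\<lambda>t. E k - (a k * t + b k * t\<^sup>2)) has_real_derivative - a k) (at 0)"
      by (auto intro!: derivative_eq_intros)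
    have l: "(ln has_real_derivative 1 / E k) (at (E k - (a k * 0 + b k * 0\<^sup>2)))"
      using E k by (simp add: DERIV_ln_divide)
    from DERIV_chain2[OF l p] show ?thesis by simp
  qed
  have dH: "(H has_real_derivative F + \<mu> * (\<Sum>k<m. - a k / E k)) (at 0)"
  proof -
    have "((\<lambda>t. \<Sum>k<m. ln (E k - (a k * t + b k * t\<^sup>2))) has_real_derivative (\<Sum>k<m. - a k / E k)) (at 0)"
      by (rule DERIV_sum) (use dk in auto)
    then have "((\<lambda>t. \<mu> * (\<Sum>k<m. ln (E k - (a k * t + b k * t\<^sup>2)))) has_real_derivative \<mu> * (\<Sum>k<m. - a k / E k)) (at 0)"
      by (rule DERIV_cmult)
    moreover have "((\<lambda>t. F * t) has_real_derivative F) (at 0)"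
      by (auto intro!: derivative_eq_intros)
    ultimately show ?thesis unfolding H_def using DERIV_add by blast
  qed
  have ev: "eventually (\<lambda>t. \<forall>k\<in>{..<m}. E k - (a k * t + b k * t\<^sup>2) > 0) (nhds 0)"
  proof (rule eventually_ball_finite)
    show "finite {..<m}" by simp
    show "\<forall>k\<in>{..<m}. eventually (\<lambda>t. E k - (a k * t + b k * t\<^sup>2) > 0) (nhds 0)"
    proof
      fix k assume "k \<in> {..<m}"
      then have Ek: "E k > 0" using E by auto
      have "((\<lambda>t::real. E k - (a k * t + b k * t\<^sup>2)) \<longlongrightarrow> E k - (a k * 0 + b k * 0\<^sup>2)) (nhds 0)"
        by (intro tendsto_intros) (simp_all add: filterlim_ident)
      then have "((\<lambda>t::real. E k - (a k * t + b k * t\<^sup>2)) \<longlongrightarrow> E k) (nhds 0)" by simp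
      from order_tendstoD(1)[OF this Ek] show "eventually (\<lambda>t. E k - (a k * t + b k * t\<^sup>2) > 0) (nhds 0)" .
    qed
  qed
  then obtain d where d: "d > 0" "\<forall>t. dist t 0 < d \<longrightarrow> (\<forall>k\<in>{..<m}. E k - (a k * t + b k * t\<^sup>2) > 0)"
    unfolding eventually_nhds_metric by blast
  have "\<forall>y. \<bar>0 - y\<bar> < d \<longrightarrow> H y \<le> H 0"
  proof (intro allI impI)
    fix y :: real assume "\<bar>0 - y\<bar> < d"
    then have "\<forall>k<m. E k - (a k * y + b k * y\<^sup>2) > 0" using d by (auto simp: dist_real_def)
    then show "H y \<le> H 0" using mx unfolding H_def by simp
  qed
  from DERIV_local_max[OF dH d(1) this]
  have "F + \<mu> * (\<Sum>k<m. - a k / E k) = 0" .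
  then show ?thesis by (simp add: sum_negf)
qed

lemma subseq4:
  fixes S U1 U2 W :: "nat \<Rightarrow> nat \<Rightarrow> real"
  assumes "\<forall>j. \<forall>k<m. \<bar>S j k\<bar> \<le> B" "\<forall>j. \<forall>i<n. \<bar>U1 j i\<bar> \<le> B \<and> \<bar>U2 j i\<bar> \<le> B \<and> \<bar>W j i\<bar> \<le> B"
  shows "\<exists>\<rho> s a1 a2 aw. strict_mono \<rho> \<and> (\<forall>k<m. (\<lambda>j. S (\<rho> j) k) \<longlonglongrightarrow> s k) \<and>
     (\<forall>i<n. (\<lambda>j. U1 (\<rho> j) i) \<longlonglongrightarrow> a1 i) \<and> (\<forall>i<n. (\<lambda>j. U2 (\<rho> j) i) \<longlonglongrightarrow> a2 i) \<and>
     (\<forall>i<n. (\<lambda>j. W (\<rho> j) i) \<longlonglongrightarrow> aw i)"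
proof -
  define Z where "Z j i = (if i < m then S j i else if i < m + n then U1 j (i - m)
      else if i < m + 2 * n then U2 j (i - m - n) else W j (i - m - 2 * n))" for j i
  have "\<forall>j. \<forall>i<m + 3 * n. \<bar>Z j i\<bar> \<le> B"
  proof (intro allI impI)
    fix j i assume i: "i < m + 3 * n"
    show "\<bar>Z j i\<bar> \<le> B" unfolding Z_def using assms i by auto
  qed
  from bounded_subseq[OF this] obtain \<rho> where \<rho>: "strict_mono \<rho>"
    "\<forall>i<m + 3 * n. \<exists>a. (\<lambda>j. Z (\<rho> j) i) \<longlonglongrightarrow> a" by blast
  define L where "L i = lim (\<lambda>j. Z (\<rho> j) i)" for i
  have L: "(\<lambda>j. Z (\<rho> j) i) \<longlonglongrightarrow> L i" if "i < m + 3 * n" for i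
    using \<rho>(2) that unfolding L_def by (meson convergentI convergent_LIMSEQ_iff)
  show ?thesis
  proof (intro exI conjI allI impI)
    show "strict_mono \<rho>" by fact
    fix k assume "k < m"
    then show "(\<lambda>j. S (\<rho> j) k) \<longlonglongrightarrow> L k" using L[of k] by (simp add: Z_def)
  next
    fix i assume i: "i < n"
    show "(\<lambda>j. U1 (\<rho> j) i) \<longlonglongrightarrow> L (m + i)" using L[of "m + i"] i by (simp add: Z_def)
    show "(\<lambda>j. U2 (\<rho> j) i) \<longlonglongrightarrow> L (m + n + i)" using L[of "m + n + i"] i by (simp add: Z_def)
    show "(\<lambda>j. W (\<rho> j) i) \<longlonglongrightarrow> L (m + 2 * n + i)" using L[of "m + 2 * n + i"] i by (simp add: Z_def)
  qed
qed

locale setting =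
  fixes n m :: nat and chi cm cp :: "nat \<Rightarrow> real^2" and f :: "nat \<Rightarrow> real"
  assumes lpos: "\<And>k. k < m \<Longrightarrow> len cm cp k > 0"
begin

abbreviation "l \<equiv> len cm cp"
abbreviation "D \<equiv> Dmat chi cm cp"
abbreviation "B1 \<equiv> B1mat chi cm cp"
abbreviation "B2 \<equiv> B2mat chi cm cp"
definition "Bu u1 u2 k = mv B1 n u1 k + mv B2 n u2 k"
abbreviation "Dw w k \<equiv> mv D n w k"
definition "g u1 u2 w k = (Dw w k)\<^sup>2 / (4 * l k) + Bu u1 u2 k - l k"
definition "lin s q \<longleftrightarrow> (\<forall>i<n. tmv B1 m s i = 0 \<and> tmv B2 m s i = 0 \<and> tmv D m q i = f i)"

lemma dual_obj_eq:
  assumes "\<forall>i<n. tmv D m q i = f i"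
  shows "dual_obj n f w = (\<Sum>k<m. q k * Dw w k)"
proof -
  have "dual_obj n f w = (\<Sum>i<n. tmv D m q i * w i)"
    unfolding dual_obj_def using assms by (intro sum.cong) auto
  also have "\<dots> = (\<Sum>i<n. \<Sum>k<m. D k i * q k * w i)"
    unfolding tmv_def by (simp add: sum_distrib_right)
  also have "\<dots> = (\<Sum>k<m. \<Sum>i<n. D k i * q k * w i)"
    by (rule sum.swap)
  also have "\<dots> = (\<Sum>k<m. q k * Dw w k)"
    unfolding mv_def by (simp add: sum_distrib_left algebra_simps)
  finally show ?thesis .
qed

lemma sBu_zero:
  assumes "\<forall>i<n. tmv B1 m s i = 0 \<and> tmv B2 m s i = 0"
  shows "(\<Sum>k<m. s k * Bu u1 u2 k) = 0"
proof -
  have "(\<Sum>k<m. s k * Bu u1 u2 k) = (\<Sum>k<m. \<Sum>i<n. B1 k i * s k * u1 i + B2 k i * s k * u2 i)"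
    unfolding Bu_def mv_def by (simp add: sum_distrib_left sum.distrib algebra_simps)
  also have "\<dots> = (\<Sum>i<n. \<Sum>k<m. B1 k i * s k * u1 i + B2 k i * s k * u2 i)"
    by (rule sum.swap)
  also have "\<dots> = (\<Sum>i<n. tmv B1 m s i * u1 i + tmv B2 m s i * u2 i)"
    unfolding tmv_def by (simp add: sum.distrib sum_distrib_right)
  also have "\<dots> = 0" using assms by (intro sum.neutral) auto
  finally show ?thesis .
qed

lemma gap_eq:
  assumes "lin s q"
  shows "primal_obj m cm cp s r - dual_obj n f w =
    (\<Sum>k<m. s k * (l k - Bu u1 u2 k) + 2 * l k * r k - q k * Dw w k)"
proof -
  have d: "dual_obj n f w = (\<Sum>k<m. q k * Dw w k)"
    using assms unfolding lin_def by (intro dual_obj_eq) auto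
  have z: "(\<Sum>k<m. s k * Bu u1 u2 k) = 0"
    using assms unfolding lin_def by (intro sBu_zero) auto
  have "(\<Sum>k<m. s k * (l k - Bu u1 u2 k) + 2 * l k * r k - q k * Dw w k)
     = (\<Sum>k<m. l k * s k) + 2 * (\<Sum>k<m. l k * r k) - (\<Sum>k<m. s k * Bu u1 u2 k) - (\<Sum>k<m. q k * Dw w k)"
    by (simp add: sum.distrib sum_subtractf sum_distrib_left algebra_simps)
  then show ?thesis using d z unfolding primal_obj_def by simp
qed

lemma term_nonneg:
  fixes s r q lk t2 dw :: real
  assumes "s \<ge> 0" "r \<ge> 0" "q\<^sup>2 \<le> 2 * r * s" "lk > 0" "t2 \<ge> 0" "dw\<^sup>2 \<le> 4 * lk * t2"
  shows "s * t2 + 2 * lk * r - q * dw \<ge> 0"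
proof -
  have a: "0 \<le> s * t2 + 2 * lk * r" using assms by simp
  have "(q * dw)\<^sup>2 = q\<^sup>2 * dw\<^sup>2" by (simp add: power_mult_distrib)
  also have "\<dots> \<le> (2 * r * s) * (4 * lk * t2)"
    using assms by (intro mult_mono) auto
  also have "\<dots> \<le> (s * t2 + 2 * lk * r)\<^sup>2"
  proof -
    have "(s * t2 + 2 * lk * r)\<^sup>2 - (2 * r * s) * (4 * lk * t2) = (s * t2 - 2 * lk * r)\<^sup>2"
      by (simp add: power2_eq_square algebra_simps)
    moreover have "(s * t2 - 2 * lk * r)\<^sup>2 \<ge> 0" by simp
    ultimately show ?thesis by linarith
  qed
  finally have "\<bar>q * dw\<bar> \<le> \<bar>s * t2 + 2 * lk * r\<bar>"
    using abs_le_square_iff by blast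
  then have "\<bar>q * dw\<bar> \<le> s * t2 + 2 * lk * r" using a by simp
  then show ?thesis by linarith
qed

lemma term_zero:
  fixes s r q lk t2 dw :: real
  assumes "s \<ge> 0" "r \<ge> 0" "q\<^sup>2 \<le> 2 * r * s" "lk > 0" "t2 \<ge> 0" "dw\<^sup>2 \<le> 4 * lk * t2"
    and z: "s * t2 + 2 * lk * r - q * dw = 0"
  shows "q = 1/2 * s * dw / lk \<and> (s \<noteq> 0 \<longrightarrow> t2 = dw\<^sup>2 / (4 * lk))"
proof (cases "s = 0")
  case True
  then have "q\<^sup>2 \<le> 0" using assms by simp
  then have "q = 0" by simp
  then show ?thesis using True by simp
next
  case False
  then have sp: "s > 0" using assms by simp
  have h1: "2 * lk * r * s \<ge> lk * q\<^sup>2" using assms by (simp add: mult_left_mono algebra_simps)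
  have h2: "s * t2 * (4 * lk) \<ge> s * dw\<^sup>2"
    using mult_left_mono[OF assms(6) assms(1)] by (simp add: algebra_simps)
  have key: "0 = (s * t2 + 2 * lk * r - q * dw) * (4 * lk * s)" using z by simp
  also have "\<dots> = (s * t2 * (4 * lk) - s * dw\<^sup>2) * s + 4 * lk * (2 * lk * r * s - lk * q\<^sup>2) + (s * dw - 2 * lk * q)\<^sup>2"
    by (simp add: power2_eq_square algebra_simps)
  finally have e: "0 = (s * t2 * (4 * lk) - s * dw\<^sup>2) * s + 4 * lk * (2 * lk * r * s - lk * q\<^sup>2) + (s * dw - 2 * lk * q)\<^sup>2" .
  have p1: "(s * t2 * (4 * lk) - s * dw\<^sup>2) * s \<ge> 0" using h2 sp by simp
  have p2: "4 * lk * (2 * lk * r * s - lk * q\<^sup>2) \<ge> 0" using h1 assms by simp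
  have p3: "(s * dw - 2 * lk * q)\<^sup>2 \<ge> 0" by simp
  have "(s * dw - 2 * lk * q)\<^sup>2 = 0" using e p1 p2 p3 by linarith
  then have q: "q = 1/2 * s * dw / lk" using assms by (simp add: field_simps)
  have "(s * t2 * (4 * lk) - s * dw\<^sup>2) * s = 0" using e p1 p2 p3 by linarith
  then have "t2 * (4 * lk) = dw\<^sup>2" using sp by (simp add: algebra_simps)
  then have "t2 = dw\<^sup>2 / (4 * lk)" using assms by (simp add: field_simps)
  then show ?thesis using q by simp
qed


lemma term_of_feas:
  assumes p: "primal_feas n m chi cm cp f s r q" and d: "dual_feas n m chi cm cp u1 u2 w t1 t2 t3"
    and k: "k < m"
  shows "s k * (l k - Bu u1 u2 k) + 2 * l k * r k - q k * Dw w k \<ge> 0"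
    and "t2 k = l k - Bu u1 u2 k" "(Dw w k)\<^sup>2 \<le> 4 * l k * t2 k" "t2 k \<ge> 0"
proof -
  have t: "t2 k = l k - Bu u1 u2 k" "t3 k = - Dw w k" "t1 k = 2 * l k" "t2 k \<ge> 0"
    "2 * t1 k * t2 k \<ge> (t3 k)\<^sup>2"
    using d k unfolding dual_feas_def inK_def Bu_def by (auto simp: algebra_simps)
  show "t2 k = l k - Bu u1 u2 k" "t2 k \<ge> 0" using t by auto
  show dw: "(Dw w k)\<^sup>2 \<le> 4 * l k * t2 k" using t by simp
  have "s k \<ge> 0" "r k \<ge> 0" "(q k)\<^sup>2 \<le> 2 * r k * s k"
    using p k unfolding primal_feas_def inK_def by auto
  from term_nonneg[OF this lpos[OF k] t(4) dw] t(1)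
  show "s k * (l k - Bu u1 u2 k) + 2 * l k * r k - q k * Dw w k \<ge> 0" by simp
qed

lemma weak:
  assumes p: "primal_feas n m chi cm cp f s r q" and d: "dual_feas n m chi cm cp u1 u2 w t1 t2 t3"
  shows "dual_obj n f w \<le> primal_obj m cm cp s r"
proof -
  have "lin s q" using p unfolding primal_feas_def lin_def by auto
  from gap_eq[OF this, of r w u1 u2]
  have "primal_obj m cm cp s r - dual_obj n f w =
    (\<Sum>k<m. s k * (l k - Bu u1 u2 k) + 2 * l k * r k - q k * Dw w k)" .
  also have "\<dots> \<ge> 0" using term_of_feas[OF p d] by (intro sum_nonneg) auto
  finally show ?thesis by simp
qed

definition "KKT s q u1 u2 w \<longleftrightarrow> (\<forall>k<m. s k \<ge> 0) \<and> (\<forall>k<m. g u1 u2 w k \<le> 0) \<and> lin s q \<and>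
   (\<forall>k<m. s k \<noteq> 0 \<longrightarrow> g u1 u2 w k = 0) \<and> (\<forall>k<m. q k = 1/2 * s k * Dw w k / l k)"

lemma kkt_opt:
  assumes "KKT s q u1 u2 w"
  defines "r \<equiv> \<lambda>k. (q k)\<^sup>2 / (2 * s k)"
  shows "primal_sol n m chi cm cp f s r q"
    "dual_sol n m chi cm cp f u1 u2 w (\<lambda>k. 2 * l k) (\<lambda>k. l k - Bu u1 u2 k) (\<lambda>k. - Dw w k)"
    "primal_obj m cm cp s r = dual_obj n f w"
proof -
  have sp: "\<forall>k<m. s k \<ge> 0" and gle: "\<forall>k<m. g u1 u2 w k \<le> 0" and lin: "lin s q"
    and gz: "\<forall>k<m. s k \<noteq> 0 \<longrightarrow> g u1 u2 w k = 0" and qe: "\<forall>k<m. q k = 1/2 * s k * Dw w k / l k"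
    using assms unfolding KKT_def by auto
  have pf: "primal_feas n m chi cm cp f s r q"
    unfolding primal_feas_def inK_def
  proof (intro conjI allI impI)
    fix k assume k: "k < m"
    show "s k \<ge> 0" using sp k by auto
    show "r k \<ge> 0" unfolding r_def using sp k by auto
    show "2 * r k * s k \<ge> (q k)\<^sup>2"
    proof (cases "s k = 0")
      case True then show ?thesis using qe k by simp
    next
      case False then show ?thesis unfolding r_def by simp
    qed
  qed (use lin sp in \<open>auto simp: lin_def r_def\<close>)
  have t2: "l k - Bu u1 u2 k \<ge> (Dw w k)\<^sup>2 / (4 * l k)" if "k < m" for k
    using gle that unfolding g_def by auto
  have t2nn: "l k - Bu u1 u2 k \<ge> 0" if "k < m" for k
  proof -
    have "(Dw w k)\<^sup>2 / (4 * l k) \<ge> 0" using lpos[OF that] by simp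
    then show ?thesis using t2[OF that] by linarith
  qed
  have df: "dual_feas n m chi cm cp u1 u2 w (\<lambda>k. 2 * l k) (\<lambda>k. l k - Bu u1 u2 k) (\<lambda>k. - Dw w k)"
    unfolding dual_feas_def inK_def
  proof (intro allI impI conjI)
    fix k assume k: "k < m"
    have lp: "l k > 0" using lpos k .
    have h: "l k - Bu u1 u2 k \<ge> (Dw w k)\<^sup>2 / (4 * l k)" using t2 k .
    have "(Dw w k)\<^sup>2 / (4 * l k) \<ge> 0" using lp by simp
    then show "l k - Bu u1 u2 k \<ge> 0" using h by linarith
    show "2 * l k \<ge> 0" using lp by simp
    have "(Dw w k)\<^sup>2 \<le> 4 * l k * (l k - Bu u1 u2 k)"
      using h lp by (simp add: field_simps)
    then show "(- Dw w k)\<^sup>2 \<le> 2 * (2 * l k) * (l k - Bu u1 u2 k)" by simp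
  qed (use t2nn lpos in \<open>auto simp: Bu_def less_imp_le\<close>)
  have terms: "s k * (l k - Bu u1 u2 k) + 2 * l k * r k - q k * Dw w k = 0" if k: "k < m" for k
  proof (cases "s k = 0")
    case True then show ?thesis using qe k unfolding r_def by simp
  next
    case False
    have lp: "l k > 0" using lpos k .
    have e: "l k - Bu u1 u2 k = (Dw w k)\<^sup>2 / (4 * l k)" using gz k False unfolding g_def by auto
    show ?thesis unfolding e r_def qe[rule_format, OF k] using False lp
      by (simp add: field_simps power2_eq_square)
  qed
  have gap: "primal_obj m cm cp s r - dual_obj n f w = 0"
    unfolding gap_eq[OF lin, of r w u1 u2] using terms by (intro sum.neutral) auto
  then show "primal_obj m cm cp s r = dual_obj n f w" by simp
  show "primal_sol n m chi cm cp f s r q"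
    unfolding primal_sol_def using pf gap weak[OF _ df] by force
  show "dual_sol n m chi cm cp f u1 u2 w (\<lambda>k. 2 * l k) (\<lambda>k. l k - Bu u1 u2 k) (\<lambda>k. - Dw w k)"
    unfolding dual_sol_def using df gap weak[OF pf] by force
qed

lemma g_le_iff: "k < m \<Longrightarrow> ((1/4) * (Dw w k)\<^sup>2 / l k + (mv B1 n u1 k + mv B2 n u2 k) \<le> l k) \<longleftrightarrow> g u1 u2 w k \<le> 0"
  unfolding g_def Bu_def by (simp add: field_simps)

lemma g_eq_iff: "k < m \<Longrightarrow> ((1/4) * (Dw w k)\<^sup>2 / l k + (mv B1 n u1 k + mv B2 n u2 k) = l k) \<longleftrightarrow> g u1 u2 w k = 0"
  unfolding g_def Bu_def by (simp add: field_simps)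

lemma main_from_kkt:
  assumes ex: "\<exists>s q u1 u2 w. KKT s q u1 u2 w"
  shows "(\<exists>Z. (\<exists>s r q. primal_sol n m chi cm cp f s r q \<and> primal_obj m cm cp s r = Z) \<and>
              (\<exists>u1 u2 w t1 t2 t3. dual_sol n m chi cm cp f u1 u2 w t1 t2 t3 \<and> dual_obj n f w = Z))
     \<and> (\<forall>s q u1 u2 w. (\<forall>k<m. s k \<ge> 0) \<longrightarrow>
          (((\<exists>r. primal_sol n m chi cm cp f s r q) \<and>
            (\<exists>t1 t2 t3. dual_sol n m chi cm cp f u1 u2 w t1 t2 t3))
           \<longleftrightarrow>
           ((\<forall>k<m. (1/4) * (mv (Dmat chi cm cp) n w k)\<^sup>2 / len cm cp k
                      + (mv (B1mat chi cm cp) n u1 k + mv (B2mat chi cm cp) n u2 k) \<le> len cm cp k) \<and>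
            (\<forall>i<n. tmv (B1mat chi cm cp) m s i = 0 \<and> tmv (B2mat chi cm cp) m s i = 0 \<and>
                   tmv (Dmat chi cm cp) m q i = f i) \<and>
            (\<forall>k<m. s k \<noteq> 0 \<longrightarrow> (1/4) * (mv (Dmat chi cm cp) n w k)\<^sup>2 / len cm cp k
                      + (mv (B1mat chi cm cp) n u1 k + mv (B2mat chi cm cp) n u2 k) = len cm cp k) \<and>
            (\<forall>k<m. q k = (1/2) * s k * mv (Dmat chi cm cp) n w k / len cm cp k))))"
proof -
  obtain s0 q0 u10 u20 w0 where K0: "KKT s0 q0 u10 u20 w0" using ex by blast
  note o0 = kkt_opt[OF K0]
  define r0 where "r0 = (\<lambda>k. (q0 k)\<^sup>2 / (2 * s0 k))"
  have part1: "\<exists>Z. (\<exists>s r q. primal_sol n m chi cm cp f s r q \<and> primal_obj m cm cp s r = Z) \<and>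
              (\<exists>u1 u2 w t1 t2 t3. dual_sol n m chi cm cp f u1 u2 w t1 t2 t3 \<and> dual_obj n f w = Z)"
    using o0 by blast
  have part2: "((\<exists>r. primal_sol n m chi cm cp f s r q) \<and>
            (\<exists>t1 t2 t3. dual_sol n m chi cm cp f u1 u2 w t1 t2 t3))
           \<longleftrightarrow> KKT s q u1 u2 w" if sp: "\<forall>k<m. s k \<ge> 0" for s q u1 u2 w :: "nat \<Rightarrow> real"
  proof
    assume "KKT s q u1 u2 w"
    from kkt_opt[OF this] show "(\<exists>r. primal_sol n m chi cm cp f s r q) \<and>
            (\<exists>t1 t2 t3. dual_sol n m chi cm cp f u1 u2 w t1 t2 t3)" by blast
  next
    assume "(\<exists>r. primal_sol n m chi cm cp f s r q) \<and>
            (\<exists>t1 t2 t3. dual_sol n m chi cm cp f u1 u2 w t1 t2 t3)"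
    then obtain r t1 t2 t3 where ps: "primal_sol n m chi cm cp f s r q"
      and ds: "dual_sol n m chi cm cp f u1 u2 w t1 t2 t3" by blast
    have pf: "primal_feas n m chi cm cp f s r q" using ps unfolding primal_sol_def by auto
    have df: "dual_feas n m chi cm cp u1 u2 w t1 t2 t3" using ds unfolding dual_sol_def by auto
    have pf0: "primal_feas n m chi cm cp f s0 r0 q0" using o0(1) unfolding primal_sol_def r0_def by auto
    have df0: "dual_feas n m chi cm cp u10 u20 w0 (\<lambda>k. 2 * l k) (\<lambda>k. l k - Bu u10 u20 k) (\<lambda>k. - Dw w0 k)"
      using o0(2) unfolding dual_sol_def by auto
    have "primal_obj m cm cp s r \<le> primal_obj m cm cp s0 r0"
      using ps pf0 unfolding primal_sol_def by blast
    also have "\<dots> = dual_obj n f w0" using o0(3) unfolding r0_def .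
    also have "\<dots> \<le> dual_obj n f w" using ds df0 unfolding dual_sol_def by blast
    finally have le: "primal_obj m cm cp s r \<le> dual_obj n f w" .
    have lin: "lin s q" using pf unfolding primal_feas_def lin_def by auto
    have "(\<Sum>k<m. s k * (l k - Bu u1 u2 k) + 2 * l k * r k - q k * Dw w k) = 0"
    proof -
      have "(\<Sum>k<m. s k * (l k - Bu u1 u2 k) + 2 * l k * r k - q k * Dw w k) \<le> 0"
        using le gap_eq[OF lin, of r w u1 u2] by simp
      moreover have "(\<Sum>k<m. s k * (l k - Bu u1 u2 k) + 2 * l k * r k - q k * Dw w k) \<ge> 0"
        using term_of_feas(1)[OF pf df] by (intro sum_nonneg) auto
      ultimately show ?thesis by linarith
    qed
    then have tz: "\<forall>k<m. s k * (l k - Bu u1 u2 k) + 2 * l k * r k - q k * Dw w k = 0"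
      using term_of_feas(1)[OF pf df] by (subst (asm) sum_nonneg_eq_0_iff) auto
    show "KKT s q u1 u2 w"
      unfolding KKT_def
    proof (intro conjI allI impI)
      fix k assume k: "k < m"
      have fk: "t2 k = l k - Bu u1 u2 k" "(Dw w k)\<^sup>2 \<le> 4 * l k * t2 k" "t2 k \<ge> 0"
        using term_of_feas(2-4)[OF pf df k] by auto
      have pk: "s k \<ge> 0" "r k \<ge> 0" "(q k)\<^sup>2 \<le> 2 * r k * s k"
        using pf k unfolding primal_feas_def inK_def by auto
      have lp: "l k > 0" using lpos k .
      from term_zero[OF pk lp fk(3) fk(2)] tz k fk(1)
      have tzk: "q k = 1/2 * s k * Dw w k / l k \<and> (s k \<noteq> 0 \<longrightarrow> t2 k = (Dw w k)\<^sup>2 / (4 * l k))"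
        by auto
      show "s k \<ge> 0" using pk by simp
      show "q k = 1/2 * s k * Dw w k / l k" using tzk by simp
      have "(Dw w k)\<^sup>2 / (4 * l k) \<le> t2 k" using fk(2) lp by (simp add: field_simps)
      then show "g u1 u2 w k \<le> 0" unfolding g_def using fk(1) by simp
      assume "s k \<noteq> 0"
      then show "g u1 u2 w k = 0" unfolding g_def using fk(1) tzk by simp
    qed (use lin in auto)
  qed
  show ?thesis
  proof (intro conjI part1 allI impI)
    fix s q u1 u2 w :: "nat \<Rightarrow> real" assume sp: "\<forall>k<m. s k \<ge> 0"
    show "((\<exists>r. primal_sol n m chi cm cp f s r q) \<and>
            (\<exists>t1 t2 t3. dual_sol n m chi cm cp f u1 u2 w t1 t2 t3))
           \<longleftrightarrow>
           ((\<forall>k<m. (1/4) * (mv (Dmat chi cm cp) n w k)\<^sup>2 / len cm cp k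
                      + (mv (B1mat chi cm cp) n u1 k + mv (B2mat chi cm cp) n u2 k) \<le> len cm cp k) \<and>
            (\<forall>i<n. tmv (B1mat chi cm cp) m s i = 0 \<and> tmv (B2mat chi cm cp) m s i = 0 \<and>
                   tmv (Dmat chi cm cp) m q i = f i) \<and>
            (\<forall>k<m. s k \<noteq> 0 \<longrightarrow> (1/4) * (mv (Dmat chi cm cp) n w k)\<^sup>2 / len cm cp k
                      + (mv (B1mat chi cm cp) n u1 k + mv (B2mat chi cm cp) n u2 k) = len cm cp k) \<and>
            (\<forall>k<m. q k = (1/2) * s k * mv (Dmat chi cm cp) n w k / len cm cp k))"
      unfolding part2[OF sp] KKT_def lin_def using sp g_le_iff g_eq_iff by auto
  qed
qed

end

locale setting2 = setting +
  assumes bnd: "\<exists>R. \<forall>u1 u2 w. (\<forall>k<m. g u1 u2 w k \<le> 0) \<longrightarrow> (\<forall>i<n. \<bar>u1 i\<bar> \<le> R \<and> \<bar>u2 i\<bar> \<le> R \<and> \<bar>w i\<bar> \<le> R)"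
begin

definition "bound R \<longleftrightarrow> R \<ge> 0 \<and> (\<forall>u1 u2 w. (\<forall>k<m. g u1 u2 w k \<le> 0) \<longrightarrow> (\<forall>i<n. \<bar>u1 i\<bar> \<le> R \<and> \<bar>u2 i\<bar> \<le> R \<and> \<bar>w i\<bar> \<le> R))"

lemma obtain_bound: obtains R where "bound R"
proof -
  obtain R where R: "\<forall>u1 u2 w. (\<forall>k<m. g u1 u2 w k \<le> 0) \<longrightarrow> (\<forall>i<n. \<bar>u1 i\<bar> \<le> R \<and> \<bar>u2 i\<bar> \<le> R \<and> \<bar>w i\<bar> \<le> R)"
    using bnd by blast
  have "bound (max R 0)" unfolding bound_def using R by force
  then show ?thesis using that by blast
qed

lemma gK:
  assumes "bound R"
  shows "\<exists>K\<ge>1. \<forall>u1 u2 w. (\<forall>k<m. g u1 u2 w k \<le> 0) \<longrightarrow> (\<forall>k<m. - g u1 u2 w k \<le> K)"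
proof -
  have R0: "R \<ge> 0" using assms unfolding bound_def by auto
  define T where "T k = l k + (\<Sum>i<n. \<bar>B1 k i\<bar>) * R + (\<Sum>i<n. \<bar>B2 k i\<bar>) * R" for k
  define K where "K = (\<Sum>k<m. T k) + 1"
  have Tnn: "T k \<ge> 0" if "k < m" for k
    unfolding T_def using lpos[OF that] R0 by (auto intro!: add_nonneg_nonneg mult_nonneg_nonneg sum_nonneg)
  have "(\<Sum>k<m. T k) \<ge> 0" by (rule sum_nonneg) (use Tnn in auto)
  then have "K \<ge> 1" unfolding K_def by simp
  moreover have "\<forall>u1 u2 w. (\<forall>k<m. g u1 u2 w k \<le> 0) \<longrightarrow> (\<forall>k<m. - g u1 u2 w k \<le> K)"
  proof (intro allI impI)
    fix u1 u2 w k assume f: "\<forall>k<m. g u1 u2 w k \<le> 0" and k: "k < m"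
    have c: "\<forall>i<n. \<bar>u1 i\<bar> \<le> R" "\<forall>i<n. \<bar>u2 i\<bar> \<le> R" using assms f unfolding bound_def by auto
    have "- g u1 u2 w k \<le> l k - Bu u1 u2 k"
      unfolding g_def using lpos[OF k] by simp
    also have "\<dots> \<le> l k + \<bar>mv B1 n u1 k\<bar> + \<bar>mv B2 n u2 k\<bar>" unfolding Bu_def by linarith
    also have "\<dots> \<le> T k" unfolding T_def using mv_abs_le[OF c(1), of B1 k] mv_abs_le[OF c(2), of B2 k] by linarith
    also have "\<dots> \<le> (\<Sum>k<m. T k)" using Tnn k by (intro member_le_sum) auto
    also have "\<dots> \<le> K" unfolding K_def by simp
    finally show "- g u1 u2 w k \<le> K" .
  qed
  ultimately show ?thesis by blast
qed

lemma obj_bound: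
  assumes "bound R" "\<forall>k<m. g u1 u2 w k \<le> 0"
  shows "dual_obj n f w \<le> (\<Sum>i<n. \<bar>f i\<bar>) * R"
proof -
  have c: "\<forall>i<n. \<bar>w i\<bar> \<le> R" using assms unfolding bound_def by auto
  have "dual_obj n f w = mv (\<lambda>_ i. f i) n w 0" unfolding dual_obj_def mv_def by simp
  also have "\<dots> \<le> \<bar>mv (\<lambda>_ i. f i) n w 0\<bar>" by simp
  also have "\<dots> \<le> (\<Sum>i<n. \<bar>f i\<bar>) * R" using mv_abs_le[OF c, of "\<lambda>_ i. f i" 0] by simp
  finally show ?thesis .
qed

lemma tendsto_g:
  assumes "\<forall>i<n. (\<lambda>j. U1 j i) \<longlonglongrightarrow> a1 i" "\<forall>i<n. (\<lambda>j. U2 j i) \<longlonglongrightarrow> a2 i" "\<forall>i<n. (\<lambda>j. W j i) \<longlonglongrightarrow> aw i"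
    and k: "k < m"
  shows "(\<lambda>j. g (U1 j) (U2 j) (W j) k) \<longlonglongrightarrow> g a1 a2 aw k"
  unfolding g_def Bu_def using lpos[OF k]
  using tendsto_mv[OF assms(1)] tendsto_mv[OF assms(2)] tendsto_mv[OF assms(3)]
  by (intro tendsto_intros) auto

lemma tendsto_dual_obj:
  assumes "\<forall>i<n. (\<lambda>j. W j i) \<longlonglongrightarrow> aw i"
  shows "(\<lambda>j. dual_obj n f (W j)) \<longlonglongrightarrow> dual_obj n f aw"
  unfolding dual_obj_def using assms by (auto intro!: tendsto_intros)

definition "sf u1 u2 w \<longleftrightarrow> (\<forall>k<m. g u1 u2 w k < 0)"
definition "phi \<mu> u1 u2 w = dual_obj n f w + \<mu> * (\<Sum>k<m. ln (- g u1 u2 w k))"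

lemma g_zero: "k < m \<Longrightarrow> g (\<lambda>_. 0) (\<lambda>_. 0) (\<lambda>_. 0) k = - l k"
  unfolding g_def Bu_def by simp

lemma sf_zero: "sf (\<lambda>_. 0) (\<lambda>_. 0) (\<lambda>_. 0)"
  unfolding sf_def using g_zero lpos by simp


lemma barrier_max:
  assumes mu: "\<mu> > 0"
  shows "\<exists>a1 a2 aw. sf a1 a2 aw \<and> (\<forall>v1 v2 z. sf v1 v2 z \<longrightarrow> phi \<mu> v1 v2 z \<le> phi \<mu> a1 a2 aw)"
proof -
  obtain R where R: "bound R" by (rule obtain_bound)
  obtain K where K: "K \<ge> 1" "\<forall>u1 u2 w. (\<forall>k<m. g u1 u2 w k \<le> 0) \<longrightarrow> (\<forall>k<m. - g u1 u2 w k \<le> K)"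
    using gK[OF R] by blast
  define FR where "FR = (\<Sum>i<n. \<bar>f i\<bar>) * R"
  have sf_le: "\<forall>k<m. g v1 v2 z k \<le> 0" if "sf v1 v2 z" for v1 v2 z
    using that unfolding sf_def by (auto intro: less_imp_le)
  have lnle: "ln (- g v1 v2 z k) \<le> ln K" if "sf v1 v2 z" "k < m" for v1 v2 z k
  proof -
    have "0 < - g v1 v2 z k" using that unfolding sf_def by auto
    moreover have "- g v1 v2 z k \<le> K" using K(2) sf_le[OF that(1)] that(2) by blast
    ultimately show ?thesis by simp
  qed
  have lnK: "ln K \<ge> 0" using K by simp
  have phi_le: "phi \<mu> v1 v2 z \<le> FR + \<mu> * (real m * ln K)" if "sf v1 v2 z" for v1 v2 z
  proof -
    have "dual_obj n f z \<le> FR" unfolding FR_def using obj_bound[OF R sf_le[OF that]] .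
    moreover have "(\<Sum>k<m. ln (- g v1 v2 z k)) \<le> real m * ln K"
      using sum_bounded_above[of "{..<m}" "\<lambda>k. ln (- g v1 v2 z k)" "ln K"] lnle[OF that] by auto
    ultimately show ?thesis unfolding phi_def using mu by (smt (verit) mult_left_mono)
  qed
  define P where "P = {phi \<mu> v1 v2 z | v1 v2 z. sf v1 v2 z}"
  define phi0 where "phi0 = phi \<mu> (\<lambda>_. 0) (\<lambda>_. 0) (\<lambda>_. 0)"
  have P0: "phi0 \<in> P" unfolding P_def phi0_def using sf_zero by blast
  have Pne: "P \<noteq> {}" using P0 by blast
  have Pbdd: "bdd_above P" unfolding P_def bdd_above_def using phi_le by blast
  define \<sigma> where "\<sigma> = Sup P"
  have sig0: "phi0 \<le> \<sigma>" unfolding \<sigma>_def using P0 Pbdd by (rule cSup_upper)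
  have "\<forall>j. \<exists>v1 v2 z. sf v1 v2 z \<and> \<sigma> - inverse (real (Suc j)) < phi \<mu> v1 v2 z"
  proof
    fix j
    have "\<sigma> - inverse (real (Suc j)) < \<sigma>" by simp
    then obtain x where "x \<in> P" "\<sigma> - inverse (real (Suc j)) < x"
      unfolding \<sigma>_def using less_cSup_iff[OF Pne Pbdd] by blast
    then show "\<exists>v1 v2 z. sf v1 v2 z \<and> \<sigma> - inverse (real (Suc j)) < phi \<mu> v1 v2 z"
      unfolding P_def by blast
  qed
  then obtain V1 V2 W where V: "\<And>j. sf (V1 j) (V2 j) (W j)"
    "\<And>j. \<sigma> - inverse (real (Suc j)) < phi \<mu> (V1 j) (V2 j) (W j)"
    by metis
  define c1 where "c1 = ((phi0 - 1) - FR - \<mu> * (real m * ln K)) / \<mu>"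
  have lowg: "exp c1 \<le> - g (V1 j) (V2 j) (W j) k" if k: "k < m" for j k
  proof -
    let ?L = "\<lambda>k. ln (- g (V1 j) (V2 j) (W j) k)"
    have pos: "0 < - g (V1 j) (V2 j) (W j) k" using V(1) k unfolding sf_def by auto
    have "inverse (real (Suc j)) \<le> 1" by (simp add: inverse_le_1_iff)
    then have "phi0 - 1 \<le> phi \<mu> (V1 j) (V2 j) (W j)" using V(2)[of j] sig0 by linarith
    moreover have "dual_obj n f (W j) \<le> FR" unfolding FR_def using obj_bound[OF R sf_le[OF V(1)]] .
    moreover have "(\<Sum>k<m. ?L k) = ?L k + (\<Sum>k'\<in>{..<m} - {k}. ?L k')"
      using k by (subst sum.remove[of _ k]) auto
    moreover have "(\<Sum>k'\<in>{..<m} - {k}. ?L k') \<le> real m * ln K"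
    proof -
      have "(\<Sum>k'\<in>{..<m} - {k}. ?L k') \<le> real (card ({..<m} - {k})) * ln K"
        by (rule sum_bounded_above) (use lnle[OF V(1)] in auto)
      also have "\<dots> \<le> real m * ln K" using lnK by (intro mult_right_mono) (use card_mono[of "{..<m}" "{..<m} - {k}"] in auto)
      finally show ?thesis .
    qed
    ultimately have "\<mu> * ?L k \<ge> (phi0 - 1) - FR - \<mu> * (real m * ln K)"
      unfolding phi_def using mu by (smt (verit) distrib_left mult_left_mono)
    then have "c1 \<le> ?L k" unfolding c1_def using mu by (simp add: divide_le_eq mult.commute)
    then have "exp c1 \<le> exp (?L k)" by simp
    then show ?thesis using pos by simp
  qed
  have Vb: "\<forall>j. \<forall>i<n. \<bar>V1 j i\<bar> \<le> R \<and> \<bar>V2 j i\<bar> \<le> R \<and> \<bar>W j i\<bar> \<le> R"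
    using R sf_le[OF V(1)] unfolding bound_def by blast
  obtain \<rho> s a1 a2 aw where \<rho>: "strict_mono \<rho>"
    "\<forall>i<n. (\<lambda>j. V1 (\<rho> j) i) \<longlonglongrightarrow> a1 i" "\<forall>i<n. (\<lambda>j. V2 (\<rho> j) i) \<longlonglongrightarrow> a2 i"
    "\<forall>i<n. (\<lambda>j. W (\<rho> j) i) \<longlonglongrightarrow> aw i"
    using subseq4[of 0 "\<lambda>_ _. 0" R n V1 V2 W] Vb R unfolding bound_def by auto
  have gl: "(\<lambda>j. g (V1 (\<rho> j)) (V2 (\<rho> j)) (W (\<rho> j)) k) \<longlonglongrightarrow> g a1 a2 aw k" if "k < m" for k
    using tendsto_g[OF \<rho>(2,3,4) that] .
  have lowa: "exp c1 \<le> - g a1 a2 aw k" if k: "k < m" for k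
    by (rule LIMSEQ_le_const[OF tendsto_minus[OF gl[OF k]]]) (use lowg k in auto)
  have sfa: "sf a1 a2 aw" unfolding sf_def
  proof (intro allI impI)
    fix k assume "k < m"
    from lowa[OF this] show "g a1 a2 aw k < 0" by (smt (verit) exp_gt_zero)
  qed
  have phil: "(\<lambda>j. phi \<mu> (V1 (\<rho> j)) (V2 (\<rho> j)) (W (\<rho> j))) \<longlonglongrightarrow> phi \<mu> a1 a2 aw"
  proof -
    have "(\<lambda>j. ln (- g (V1 (\<rho> j)) (V2 (\<rho> j)) (W (\<rho> j)) k)) \<longlonglongrightarrow> ln (- g a1 a2 aw k)"
      if k: "k \<in> {..<m}" for k
    proof (rule tendsto_ln)
      show "(\<lambda>j. - g (V1 (\<rho> j)) (V2 (\<rho> j)) (W (\<rho> j)) k) \<longlonglongrightarrow> - g a1 a2 aw k"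
        using gl k by (auto intro: tendsto_minus)
      show "- g a1 a2 aw k \<noteq> 0" using sfa k unfolding sf_def by auto
    qed
    then have "(\<lambda>j. \<Sum>k<m. ln (- g (V1 (\<rho> j)) (V2 (\<rho> j)) (W (\<rho> j)) k)) \<longlonglongrightarrow> (\<Sum>k<m. ln (- g a1 a2 aw k))"
      by (rule tendsto_sum)
    then show ?thesis unfolding phi_def
      by (intro tendsto_add tendsto_dual_obj[OF \<rho>(4)] tendsto_mult_left)
  qed
  have inv0: "(\<lambda>j. inverse (real (Suc (\<rho> j)))) \<longlonglongrightarrow> 0"
    using LIMSEQ_subseq_LIMSEQ[OF LIMSEQ_inverse_real_of_nat \<rho>(1)] by (simp add: o_def)
  have "(\<lambda>j. phi \<mu> (V1 (\<rho> j)) (V2 (\<rho> j)) (W (\<rho> j)) + inverse (real (Suc (\<rho> j)))) \<longlonglongrightarrow> phi \<mu> a1 a2 aw + 0"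
    by (intro tendsto_add phil inv0)
  then have lim2: "(\<lambda>j. phi \<mu> (V1 (\<rho> j)) (V2 (\<rho> j)) (W (\<rho> j)) + inverse (real (Suc (\<rho> j)))) \<longlonglongrightarrow> phi \<mu> a1 a2 aw"
    by simp
  have "\<forall>j. \<sigma> \<le> phi \<mu> (V1 (\<rho> j)) (V2 (\<rho> j)) (W (\<rho> j)) + inverse (real (Suc (\<rho> j)))"
    using V(2) by (smt (verit))
  then have "\<sigma> \<le> phi \<mu> a1 a2 aw"
    using LIMSEQ_le_const[OF lim2, of \<sigma>] by blast
  moreover have "phi \<mu> v1 v2 z \<le> \<sigma>" if "sf v1 v2 z" for v1 v2 z
    unfolding \<sigma>_def using Pbdd that unfolding P_def by (auto intro: cSup_upper)
  ultimately show ?thesis using sfa by (meson order_trans)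
qed


lemma g_updw:
  assumes i: "i < n" and k: "k < m"
  shows "- g u1 u2 (w(i := w i + t)) k = - g u1 u2 w k - (Dw w k * D k i / (2 * l k) * t + (D k i)\<^sup>2 / (4 * l k) * t\<^sup>2)"
  using lpos[OF k] unfolding g_def mv_upd[OF i] by (simp add: field_simps power2_eq_square)

lemma g_updu1:
  assumes i: "i < n"
  shows "- g (u1(i := u1 i + t)) u2 w k = - g u1 u2 w k - (B1 k i * t + 0 * t\<^sup>2)"
  unfolding g_def Bu_def mv_upd[OF i] by (simp add: algebra_simps)

lemma g_updu2:
  assumes i: "i < n"
  shows "- g u1 (u2(i := u2 i + t)) w k = - g u1 u2 w k - (B2 k i * t + 0 * t\<^sup>2)"
  unfolding g_def Bu_def mv_upd[OF i] by (simp add: algebra_simps)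

lemma dual_obj_upd:
  assumes i: "i < n"
  shows "dual_obj n f (w(i := w i + t)) = dual_obj n f w + f i * t"
proof -
  have "dual_obj n f v = mv (\<lambda>_ i. f i) n v 0" for v unfolding dual_obj_def mv_def by simp
  then show ?thesis using mv_upd[OF i, of "\<lambda>_ i. f i" w t 0] by (simp add: mult.commute)
qed

lemma approx_kkt:
  assumes mu: "\<mu> > 0"
  shows "\<exists>s q u1 u2 w. sf u1 u2 w \<and> lin s q \<and>
     (\<forall>k<m. s k > 0 \<and> s k * (- g u1 u2 w k) = \<mu> \<and> q k = 1/2 * s k * Dw w k / l k)"
proof -
  obtain a1 a2 aw where sfa: "sf a1 a2 aw"
    and mx: "\<And>v1 v2 z. sf v1 v2 z \<Longrightarrow> phi \<mu> v1 v2 z \<le> phi \<mu> a1 a2 aw"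
    using barrier_max[OF mu] by blast
  define E where "E k = - g a1 a2 aw k" for k
  have Ep: "\<forall>k<m. E k > 0" using sfa unfolding sf_def E_def by auto
  define s where "s k = \<mu> / E k" for k
  define q where "q k = 1/2 * s k * Dw aw k / l k" for k
  have phia: "phi \<mu> a1 a2 aw = dual_obj n f aw + \<mu> * (\<Sum>k<m. ln (E k))"
    unfolding phi_def E_def ..
  have wdir: "tmv D m q i = f i" if i: "i < n" for i
  proof -
    let ?a = "\<lambda>k. Dw aw k * D k i / (2 * l k)" and ?b = "\<lambda>k. (D k i)\<^sup>2 / (4 * l k)"
    have "f i - \<mu> * (\<Sum>k<m. ?a k / E k) = 0"
    proof (rule stat1[OF Ep], intro allI impI)
      fix t assume h: "\<forall>k<m. E k - (?a k * t + ?b k * t\<^sup>2) > 0"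
      have ge: "- g a1 a2 (aw(i := aw i + t)) k = E k - (?a k * t + ?b k * t\<^sup>2)" if "k < m" for k
        unfolding E_def using g_updw[OF i that] .
      have "sf a1 a2 (aw(i := aw i + t))" unfolding sf_def
      proof (intro allI impI)
        fix k assume k: "k < m"
        show "g a1 a2 (aw(i := aw i + t)) k < 0" using h[rule_format, OF k] ge[OF k] by linarith
      qed
      from mx[OF this] have "phi \<mu> a1 a2 (aw(i := aw i + t)) \<le> phi \<mu> a1 a2 aw" .
      moreover have "phi \<mu> a1 a2 (aw(i := aw i + t)) = dual_obj n f aw + f i * t + \<mu> * (\<Sum>k<m. ln (E k - (?a k * t + ?b k * t\<^sup>2)))"
        unfolding phi_def dual_obj_upd[OF i] using ge by simp
      ultimately show "f i * t + \<mu> * (\<Sum>k<m. ln (E k - (?a k * t + ?b k * t\<^sup>2))) \<le> \<mu> * (\<Sum>k<m. ln (E k))"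
        unfolding phia by simp
    qed
    moreover have "tmv D m q i = \<mu> * (\<Sum>k<m. ?a k / E k)"
      unfolding tmv_def q_def s_def sum_distrib_left by (rule sum.cong) (auto simp: field_simps)
    ultimately show ?thesis by simp
  qed
  have u1dir: "tmv B1 m s i = 0" if i: "i < n" for i
  proof -
    have "0 - \<mu> * (\<Sum>k<m. B1 k i / E k) = 0"
    proof (rule stat1[OF Ep], intro allI impI)
      fix t assume h: "\<forall>k<m. E k - (B1 k i * t + 0 * t\<^sup>2) > 0"
      have ge: "- g (a1(i := a1 i + t)) a2 aw k = E k - (B1 k i * t + 0 * t\<^sup>2)" for k
        unfolding E_def using g_updu1[OF i] .
      have "sf (a1(i := a1 i + t)) a2 aw" unfolding sf_def
      proof (intro allI impI)
        fix k assume k: "k < m"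
        show "g (a1(i := a1 i + t)) a2 aw k < 0" using h[rule_format, OF k] ge[of k] by linarith
      qed
      from mx[OF this] have "phi \<mu> (a1(i := a1 i + t)) a2 aw \<le> phi \<mu> a1 a2 aw" .
      moreover have "phi \<mu> (a1(i := a1 i + t)) a2 aw = dual_obj n f aw + \<mu> * (\<Sum>k<m. ln (E k - (B1 k i * t + 0 * t\<^sup>2)))"
        unfolding phi_def using ge by simp
      ultimately show "0 * t + \<mu> * (\<Sum>k<m. ln (E k - (B1 k i * t + 0 * t\<^sup>2))) \<le> \<mu> * (\<Sum>k<m. ln (E k))"
        unfolding phia by simp
    qed
    moreover have "tmv B1 m s i = \<mu> * (\<Sum>k<m. B1 k i / E k)"
      unfolding tmv_def s_def sum_distrib_left by (rule sum.cong) (auto simp: field_simps)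
    ultimately show ?thesis by simp
  qed
  have u2dir: "tmv B2 m s i = 0" if i: "i < n" for i
  proof -
    have "0 - \<mu> * (\<Sum>k<m. B2 k i / E k) = 0"
    proof (rule stat1[OF Ep], intro allI impI)
      fix t assume h: "\<forall>k<m. E k - (B2 k i * t + 0 * t\<^sup>2) > 0"
      have ge: "- g a1 (a2(i := a2 i + t)) aw k = E k - (B2 k i * t + 0 * t\<^sup>2)" for k
        unfolding E_def using g_updu2[OF i] .
      have "sf a1 (a2(i := a2 i + t)) aw" unfolding sf_def
      proof (intro allI impI)
        fix k assume k: "k < m"
        show "g a1 (a2(i := a2 i + t)) aw k < 0" using h[rule_format, OF k] ge[of k] by linarith
      qed
      from mx[OF this] have "phi \<mu> a1 (a2(i := a2 i + t)) aw \<le> phi \<mu> a1 a2 aw" .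
      moreover have "phi \<mu> a1 (a2(i := a2 i + t)) aw = dual_obj n f aw + \<mu> * (\<Sum>k<m. ln (E k - (B2 k i * t + 0 * t\<^sup>2)))"
        unfolding phi_def using ge by simp
      ultimately show "0 * t + \<mu> * (\<Sum>k<m. ln (E k - (B2 k i * t + 0 * t\<^sup>2))) \<le> \<mu> * (\<Sum>k<m. ln (E k))"
        unfolding phia by simp
    qed
    moreover have "tmv B2 m s i = \<mu> * (\<Sum>k<m. B2 k i / E k)"
      unfolding tmv_def s_def sum_distrib_left by (rule sum.cong) (auto simp: field_simps)
    ultimately show ?thesis by simp
  qed
  have "lin s q" unfolding lin_def using wdir u1dir u2dir by auto
  moreover have "\<forall>k<m. s k > 0 \<and> s k * (- g a1 a2 aw k) = \<mu> \<and> q k = 1/2 * s k * Dw aw k / l k"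
    using Ep mu unfolding s_def q_def E_def by (auto simp: divide_pos_neg)
  ultimately show ?thesis using sfa by blast
qed

end

context setting2 begin

lemma sum_lS:
  assumes lin: "lin s q" and kk: "\<forall>k<m. s k * (- g u1 u2 w k) = \<mu> \<and> q k = 1/2 * s k * Dw w k / l k"
  shows "(\<Sum>k<m. l k * s k) = real m * \<mu> + dual_obj n f w / 2"
proof -
  have z: "(\<Sum>k<m. s k * Bu u1 u2 k) = 0"
    using lin unfolding lin_def by (intro sBu_zero) auto
  have d: "dual_obj n f w = (\<Sum>k<m. q k * Dw w k)"
    using lin unfolding lin_def by (intro dual_obj_eq) auto
  have e: "l k * s k = \<mu> + s k * Bu u1 u2 k + 1/2 * (q k * Dw w k)" if k: "k < m" for k
  proof -
    have lp: "l k > 0" using lpos[OF k] .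
    have "l k * s k = s k * (- g u1 u2 w k) + s k * Bu u1 u2 k + s k * (Dw w k)\<^sup>2 / (4 * l k)"
      unfolding g_def by (simp add: algebra_simps)
    also have "\<dots> = \<mu> + s k * Bu u1 u2 k + 1/2 * (q k * Dw w k)"
      using kk k lp by (simp add: field_simps power2_eq_square)
    finally show ?thesis .
  qed
  have "(\<Sum>k<m. l k * s k) = (\<Sum>k<m. \<mu> + s k * Bu u1 u2 k + 1/2 * (q k * Dw w k))"
    using e by (intro sum.cong) auto
  also have "\<dots> = real m * \<mu> + (\<Sum>k<m. s k * Bu u1 u2 k) + 1/2 * (\<Sum>k<m. q k * Dw w k)"
    by (simp add: sum.distrib sum_distrib_left)
  finally show ?thesis using z d by simp
qed

lemma kkt_exists: "\<exists>s q u1 u2 w. KKT s q u1 u2 w"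
proof -
  obtain R where R: "bound R" by (rule obtain_bound)
  have R0: "R \<ge> 0" using R unfolding bound_def by auto
  define FR where "FR = (\<Sum>i<n. \<bar>f i\<bar>) * R"
  have FR0: "FR \<ge> 0" unfolding FR_def using R0 by (simp add: sum_nonneg)
  have "\<forall>j. \<exists>s q u1 u2 w. sf u1 u2 w \<and> lin s q \<and>
     (\<forall>k<m. s k > 0 \<and> s k * (- g u1 u2 w k) = inverse (real (Suc j)) \<and> q k = 1/2 * s k * Dw w k / l k)"
    using approx_kkt by simp
  then obtain S Q U1 U2 W where SQ: "\<And>j. sf (U1 j) (U2 j) (W j)" "\<And>j. lin (S j) (Q j)"
    "\<And>j. \<forall>k<m. S j k > 0 \<and> S j k * (- g (U1 j) (U2 j) (W j) k) = inverse (real (Suc j)) \<and>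
        Q j k = 1/2 * S j k * Dw (W j) k / l k"
    by metis
  have feas: "\<forall>k<m. g (U1 j) (U2 j) (W j) k \<le> 0" for j
    using SQ(1)[of j] unfolding sf_def by (auto intro: less_imp_le)
  define C where "C = real m + FR / 2"
  have lS: "l k * S j k \<le> C" if k: "k < m" for j k
  proof -
    have "(\<Sum>k<m. l k * S j k) = real m * inverse (real (Suc j)) + dual_obj n f (W j) / 2"
      using sum_lS[OF SQ(2)[of j]] SQ(3)[of j] by blast
    also have "\<dots> \<le> C"
    proof -
      have "inverse (real (Suc j)) \<le> 1" by (simp add: inverse_le_1_iff)
      then have "real m * inverse (real (Suc j)) \<le> real m" by (simp add: mult_left_le)
      moreover have "dual_obj n f (W j) \<le> FR" unfolding FR_def by (rule obj_bound[OF R feas])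
      ultimately show ?thesis unfolding C_def by simp
    qed
    finally have sum: "(\<Sum>k<m. l k * S j k) \<le> C" .
    have "l k * S j k \<le> (\<Sum>k<m. l k * S j k)"
      by (rule member_le_sum) (use k SQ(3)[of j] lpos in \<open>auto intro!: mult_nonneg_nonneg less_imp_le\<close>)
    then show ?thesis using sum by simp
  qed
  have C0: "C \<ge> 0" unfolding C_def using FR0 by simp
  define Cs where "Cs = (\<Sum>k<m. C / l k)"
  have Sb: "\<bar>S j k\<bar> \<le> Cs" if k: "k < m" for j k
  proof -
    have lp: "l k > 0" using lpos[OF k] .
    have "\<bar>S j k\<bar> = S j k" using SQ(3)[of j] k by auto
    also have "\<dots> \<le> C / l k" using lS[OF k, of j] lp by (simp add: field_simps)
    also have "\<dots> \<le> Cs" unfolding Cs_def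
      by (rule member_le_sum) (use k C0 lpos in \<open>auto intro!: divide_nonneg_pos\<close>)
    finally show ?thesis .
  qed
  define Bd where "Bd = max R Cs"
  have b1: "\<forall>j. \<forall>k<m. \<bar>S j k\<bar> \<le> Bd" unfolding Bd_def using Sb by (meson max.coboundedI2)
  have b2: "\<forall>j. \<forall>i<n. \<bar>U1 j i\<bar> \<le> Bd \<and> \<bar>U2 j i\<bar> \<le> Bd \<and> \<bar>W j i\<bar> \<le> Bd"
    using R feas unfolding bound_def Bd_def by (meson max.coboundedI1)
  obtain \<rho> s a1 a2 aw where \<rho>: "strict_mono \<rho>" "\<forall>k<m. (\<lambda>j. S (\<rho> j) k) \<longlonglongrightarrow> s k"
    "\<forall>i<n. (\<lambda>j. U1 (\<rho> j) i) \<longlonglongrightarrow> a1 i" "\<forall>i<n. (\<lambda>j. U2 (\<rho> j) i) \<longlonglongrightarrow> a2 i"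
    "\<forall>i<n. (\<lambda>j. W (\<rho> j) i) \<longlonglongrightarrow> aw i"
    using subseq4[OF b1 b2] by blast
  have gl: "(\<lambda>j. g (U1 (\<rho> j)) (U2 (\<rho> j)) (W (\<rho> j)) k) \<longlonglongrightarrow> g a1 a2 aw k" if "k < m" for k
    using tendsto_g[OF \<rho>(3,4,5) that] .
  have inv0: "(\<lambda>j. inverse (real (Suc (\<rho> j)))) \<longlonglongrightarrow> 0"
    using LIMSEQ_subseq_LIMSEQ[OF LIMSEQ_inverse_real_of_nat \<rho>(1)] by (simp add: o_def)
  define q where "q k = 1/2 * s k * Dw aw k / l k" for k
  have ql: "(\<lambda>j. Q (\<rho> j) k) \<longlonglongrightarrow> q k" if k: "k < m" for k
  proof -
    have "(\<lambda>j. 1/2 * S (\<rho> j) k * Dw (W (\<rho> j)) k / l k) \<longlonglongrightarrow> q k"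
      unfolding q_def using \<rho>(2) k tendsto_mv[OF \<rho>(5)] lpos[OF k]
      by (intro tendsto_intros) auto
    moreover have "(\<lambda>j. Q (\<rho> j) k) = (\<lambda>j. 1/2 * S (\<rho> j) k * Dw (W (\<rho> j)) k / l k)"
      using SQ(3) k by auto
    ultimately show ?thesis by simp
  qed
  have "KKT s q a1 a2 aw"
    unfolding KKT_def
  proof (intro conjI allI impI)
    fix k assume k: "k < m"
    show "s k \<ge> 0"
      by (rule LIMSEQ_le_const[OF \<rho>(2)[rule_format, OF k]]) (use SQ(3) k in \<open>auto intro: less_imp_le\<close>)
    show "g a1 a2 aw k \<le> 0"
      by (rule LIMSEQ_le_const2[OF gl[OF k]]) (use feas k in auto)
    show "q k = 1/2 * s k * Dw aw k / l k" unfolding q_def ..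
    assume sk: "s k \<noteq> 0"
    have "(\<lambda>j. S (\<rho> j) k * (- g (U1 (\<rho> j)) (U2 (\<rho> j)) (W (\<rho> j)) k)) \<longlonglongrightarrow> s k * (- g a1 a2 aw k)"
      using \<rho>(2) k gl[OF k] by (intro tendsto_intros) auto
    moreover have "(\<lambda>j. S (\<rho> j) k * (- g (U1 (\<rho> j)) (U2 (\<rho> j)) (W (\<rho> j)) k)) = (\<lambda>j. inverse (real (Suc (\<rho> j))))"
      using SQ(3) k by auto
    ultimately have "s k * (- g a1 a2 aw k) = 0" using inv0 LIMSEQ_unique by metis
    then show "g a1 a2 aw k = 0" using sk by simp
  next
    show "lin s q" unfolding lin_def
    proof (intro allI impI conjI)
      fix i assume i: "i < n"
      have t1: "(\<lambda>j. tmv B1 m (S (\<rho> j)) i) \<longlonglongrightarrow> tmv B1 m s i" by (rule tendsto_tmv) (use \<rho>(2) in auto)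
      moreover have "(\<lambda>j. tmv B1 m (S (\<rho> j)) i) = (\<lambda>j. 0)" using SQ(2) i unfolding lin_def by auto
      ultimately show "tmv B1 m s i = 0" using LIMSEQ_unique tendsto_const by metis
      have t2: "(\<lambda>j. tmv B2 m (S (\<rho> j)) i) \<longlonglongrightarrow> tmv B2 m s i" by (rule tendsto_tmv) (use \<rho>(2) in auto)
      moreover have "(\<lambda>j. tmv B2 m (S (\<rho> j)) i) = (\<lambda>j. 0)" using SQ(2) i unfolding lin_def by auto
      ultimately show "tmv B2 m s i = 0" using LIMSEQ_unique tendsto_const by metis
      have t3: "(\<lambda>j. tmv D m (Q (\<rho> j)) i) \<longlonglongrightarrow> tmv D m q i" by (rule tendsto_tmv) (use ql in auto)
      moreover have "(\<lambda>j. tmv D m (Q (\<rho> j)) i) = (\<lambda>j. f i)" using SQ(2) i unfolding lin_def by auto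
      ultimately show "tmv D m q i = f i" using LIMSEQ_unique tendsto_const by metis
    qed
  qed
  then show ?thesis by blast
qed

end

lemma hull_bound:
  fixes x :: "real^2" and S :: "(real^2) set"
  assumes "x \<in> interior (convex hull S)"
  obtains \<epsilon> where "\<epsilon> > 0" "\<And>v c. (\<forall>b\<in>S. inner v (x - b) \<le> c) \<Longrightarrow> S \<noteq> {} \<Longrightarrow> \<epsilon> * norm v \<le> c"
proof -
  obtain \<epsilon> where e: "\<epsilon> > 0" "cball x \<epsilon> \<subseteq> convex hull S"
    using assms mem_interior_cball by blast
  have "\<epsilon> * norm v \<le> c" if h: "\<forall>b\<in>S. inner v (x - b) \<le> c" and ne: "S \<noteq> {}" for v c
  proof (cases "v = 0")
    case True
    obtain b where "b \<in> S" using ne by blast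
    then show ?thesis using h True by auto
  next
    case False
    then have nv: "norm v > 0" by simp
    define p where "p = x - (\<epsilon> / norm v) *\<^sub>R v"
    have "dist x p = \<epsilon>" unfolding p_def dist_norm using nv e(1) by simp
    then have "p \<in> convex hull S" using e(2) by auto
    moreover have "convex hull S \<subseteq> {y. inner v x - c \<le> inner v y}"
    proof (rule hull_minimal)
      show "S \<subseteq> {y. inner v x - c \<le> inner v y}" using h by (auto simp: inner_diff_right)
      show "convex {y. inner v x - c \<le> inner v y}" by (rule convex_halfspace_ge)
    qed
    ultimately have "inner v x - c \<le> inner v p" by auto
    also have "inner v p = inner v x - \<epsilon> * norm v"
      unfolding p_def using nv by (simp add: inner_diff_right power2_norm_eq_inner[symmetric] power2_eq_square)
    finally show ?thesis by simp
  qed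
  then show ?thesis using that e(1) by blast
qed

lemma mv_single:
  assumes i: "i < n" and M: "\<And>i'. i' < n \<Longrightarrow> M k i' = (if i' = i then c else 0)"
  shows "mv M n v k = c * v i"
proof -
  have "mv M n v k = (\<Sum>i'<n. if i' = i then c * v i' else 0)"
    unfolding mv_def by (rule sum.cong) (auto simp: M)
  also have "\<dots> = c * v i" using i by simp
  finally show ?thesis .
qed

context setting
begin

lemma pair_row:
  assumes chi: "bij_betw chi {..<n} (X - frontier \<Omega>)" and i: "i < n" and b: "b \<in> frontier \<Omega>"
    and k: "{cm k, cp k} = {chi i, b}"
  shows "(Dw w k)\<^sup>2 = (w i)\<^sup>2"
    and "Bu u1 u2 k = ((chi i - b)$1 * u1 i + (chi i - b)$2 * u2 i) / norm (chi i - b)"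
    and "l k = norm (chi i - b)"
proof -
  let ?x = "chi i"
  have xX: "?x \<in> X - frontier \<Omega>" using chi i by (auto simp: bij_betw_def)
  then have xb: "?x \<noteq> b" using b by auto
  have nz: "norm (chi i - b) \<noteq> 0" using xb by simp
  have inj: "inj_on chi {..<n}" using chi by (auto simp: bij_betw_def)
  have nb: "chi i' \<noteq> b" if "i' < n" for i'
    using chi that b by (auto simp: bij_betw_def)
  have ex: "chi i' = ?x \<longleftrightarrow> i' = i" if "i' < n" for i'
    using inj that i by (auto dest: inj_onD)
  from k consider "cm k = ?x" "cp k = b" | "cm k = b" "cp k = ?x"
    by (auto simp: doubleton_eq_iff)
  then have main: "(Dw w k = w i \<or> Dw w k = - w i) \<and> Bu u1 u2 k = ((chi i - b)$1 * u1 i + (chi i - b)$2 * u2 i) / norm (chi i - b)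
    \<and> l k = norm (chi i - b)"
  proof cases
    case 1
    have D: "D k i' = (if i' = i then -1 else 0)" if "i' < n" for i'
      unfolding Dmat_def using 1 nb[OF that] ex[OF that] by auto
    have lk: "l k = norm (chi i - b)" unfolding len_def using 1 by (simp add: norm_minus_commute)
    have d: "Dw w k = w i \<or> Dw w k = - w i" using mv_single[of i n D k _ w, OF i D] by simp
    have m1: "mv B1 n u1 k = - ((b - chi i)$1 / l k) * u1 i"
      by (rule mv_single[OF i]) (auto simp: B1mat_def D 1 minus_divide_left)
    have m2: "mv B2 n u2 k = - ((b - chi i)$2 / l k) * u2 i"
      by (rule mv_single[OF i]) (auto simp: B2mat_def D 1 minus_divide_left)
    have "Bu u1 u2 k = ((chi i - b)$1 * u1 i + (chi i - b)$2 * u2 i) / norm (chi i - b)"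
      unfolding Bu_def m1 m2 lk using nz by (simp add: field_simps)
    then show ?thesis using d lk by blast
  next
    case 2
    have D: "D k i' = (if i' = i then 1 else 0)" if "i' < n" for i'
      unfolding Dmat_def using 2 nb[OF that] ex[OF that] by auto
    have lk: "l k = norm (chi i - b)" unfolding len_def using 2 by simp
    have d: "Dw w k = w i \<or> Dw w k = - w i" using mv_single[of i n D k _ w, OF i D] by simp
    have m1: "mv B1 n u1 k = ((chi i - b)$1 / l k) * u1 i"
      by (rule mv_single[OF i]) (auto simp: B1mat_def D 2)
    have m2: "mv B2 n u2 k = ((chi i - b)$2 / l k) * u2 i"
      by (rule mv_single[OF i]) (auto simp: B2mat_def D 2)
    have "Bu u1 u2 k = ((chi i - b)$1 * u1 i + (chi i - b)$2 * u2 i) / norm (chi i - b)"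
      unfolding Bu_def m1 m2 lk using nz by (simp add: field_simps)
    then show ?thesis using d lk by blast
  qed
  then show "(Dw w k)\<^sup>2 = (w i)\<^sup>2" "Bu u1 u2 k = ((chi i - b)$1 * u1 i + (chi i - b)$2 * u2 i) / norm (chi i - b)"
    "l k = norm (chi i - b)" by auto
qed


lemma node_bound:
  assumes X: "finite X" and Xint: "X - frontier \<Omega> \<subseteq> interior (convex hull (X \<inter> frontier \<Omega>))"
    and chi: "bij_betw chi {..<n} (X - frontier \<Omega>)"
    and pairs: "bij_betw (\<lambda>k. {cm k, cp k}) {..<m} {{a, b} | a b. a \<in> X \<and> b \<in> X \<and> a \<noteq> b}"
    and i: "i < n"
  shows "\<exists>Ri. \<forall>u1 u2 w. (\<forall>k<m. g u1 u2 w k \<le> 0) \<longrightarrow> \<bar>u1 i\<bar> \<le> Ri \<and> \<bar>u2 i\<bar> \<le> Ri \<and> \<bar>w i\<bar> \<le> Ri"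
proof -
  let ?Xb = "X \<inter> frontier \<Omega>"
  let ?x = "chi i"
  obtain M0 where M0: "\<forall>y\<in>X. norm y \<le> M0"
    using finite_imp_bounded[OF X] unfolding bounded_iff by blast
  define M where "M = max M0 0"
  have M: "\<forall>y\<in>X. norm y \<le> M" "M \<ge> 0" using M0 unfolding M_def by force+
  have xX: "?x \<in> X - frontier \<Omega>" using chi i by (auto simp: bij_betw_def)
  then have xint: "?x \<in> interior (convex hull ?Xb)" using Xint by blast
  obtain \<epsilon> where e: "\<epsilon> > 0" "\<And>v c. (\<forall>b\<in>?Xb. inner v (?x - b) \<le> c) \<Longrightarrow> ?Xb \<noteq> {} \<Longrightarrow> \<epsilon> * norm v \<le> c"
    using hull_bound[OF xint] by blast
  have ne: "?Xb \<noteq> {}"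
  proof
    assume "?Xb = {}"
    then show False using xint by simp
  qed
  have pk: "\<exists>k<m. {cm k, cp k} = {?x, b}" if b: "b \<in> ?Xb" for b
  proof -
    have "{?x, b} \<in> {{a, b} | a b. a \<in> X \<and> b \<in> X \<and> a \<noteq> b}" using xX b by blast
    then have "{?x, b} \<in> (\<lambda>k. {cm k, cp k}) ` {..<m}" using pairs unfolding bij_betw_def by simp
    then obtain k where "k \<in> {..<m}" "{?x, b} = {cm k, cp k}" by (rule imageE)
    then show ?thesis by auto
  qed
  define V where "V = 4 * M\<^sup>2 / \<epsilon>"
  define A where "A = 4 * (2 * M) * (2 * M + V)"
  have "\<forall>u1 u2 w. (\<forall>k<m. g u1 u2 w k \<le> 0) \<longrightarrow> \<bar>u1 i\<bar> \<le> V + A + 1 \<and> \<bar>u2 i\<bar> \<le> V + A + 1 \<and> \<bar>w i\<bar> \<le> V + A + 1"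
  proof (intro allI impI)
    fix u1 u2 w assume feas: "\<forall>k<m. g u1 u2 w k \<le> 0"
    define v :: "real^2" where "v = vector [u1 i, u2 i]"
    have inn: "inner v (?x - b) = (?x - b)$1 * u1 i + (?x - b)$2 * u2 i" for b
      unfolding v_def by (simp add: inner_vec_def sum_2 mult.commute)
    have facts: "l k = norm (?x - b) \<and> Bu u1 u2 k = inner v (?x - b) / norm (?x - b) \<and>
        (Dw w k)\<^sup>2 = (w i)\<^sup>2 \<and> norm (?x - b) > 0 \<and> norm (?x - b) \<le> 2 * M \<and> g u1 u2 w k \<le> 0"
      if b: "b \<in> ?Xb" and k: "k < m" "{cm k, cp k} = {?x, b}" for b k
    proof -
      have bf: "b \<in> frontier \<Omega>" using b by auto
      have "?x \<noteq> b" using xX bf by auto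
      moreover have "norm (?x - b) \<le> norm ?x + norm b" by (rule norm_triangle_ineq4)
      moreover have "norm ?x \<le> M" "norm b \<le> M" using M xX b by auto
      ultimately show ?thesis using pair_row[OF chi i bf k(2)] inn feas k(1) by auto
    qed
    have vb: "\<forall>b\<in>?Xb. inner v (?x - b) \<le> 4 * M\<^sup>2"
    proof
      fix b assume b: "b \<in> ?Xb"
      obtain k where k: "k < m" "{cm k, cp k} = {?x, b}" using pk[OF b] by blast
      note F = facts[OF b k]
      let ?d = "norm (?x - b)"
      have "(Dw w k)\<^sup>2 / (4 * l k) \<ge> 0" using F by simp
      then have "Bu u1 u2 k \<le> l k" using F unfolding g_def by linarith
      then have "inner v (?x - b) / ?d \<le> ?d" using F by simp
      then have "inner v (?x - b) \<le> ?d * ?d" using F by (simp add: divide_le_eq)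
      also have "\<dots> \<le> (2 * M) * (2 * M)" using F M(2) by (intro mult_mono) auto
      finally show "inner v (?x - b) \<le> 4 * M\<^sup>2" by (simp add: power2_eq_square)
    qed
    have nv: "norm v \<le> V" unfolding V_def using e(2)[OF vb ne] e(1) by (simp add: field_simps)
    have c1: "\<bar>u1 i\<bar> \<le> norm v" using component_le_norm_cart[of v 1] unfolding v_def by simp
    have c2: "\<bar>u2 i\<bar> \<le> norm v" using component_le_norm_cart[of v 2] unfolding v_def by simp
    obtain b where b: "b \<in> ?Xb" using ne by blast
    obtain k where k: "k < m" "{cm k, cp k} = {?x, b}" using pk[OF b] by blast
    note F = facts[OF b k]
    let ?d = "norm (?x - b)"
    have "\<bar>inner v (?x - b)\<bar> \<le> norm v * ?d" by (rule Cauchy_Schwarz_ineq2)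
    then have "\<bar>Bu u1 u2 k\<bar> \<le> norm v" using F by (simp add: divide_le_eq abs_div)
    moreover have "(w i)\<^sup>2 / (4 * ?d) \<le> l k - Bu u1 u2 k"
    proof -
      have "(Dw w k)\<^sup>2 / (4 * l k) + Bu u1 u2 k - l k \<le> 0" using F unfolding g_def by blast
      moreover have "(Dw w k)\<^sup>2 / (4 * l k) = (w i)\<^sup>2 / (4 * ?d)" using F by simp
      ultimately show ?thesis by linarith
    qed
    ultimately have "(w i)\<^sup>2 / (4 * ?d) \<le> 2 * M + V" using F nv by linarith
    then have "(w i)\<^sup>2 \<le> (2 * M + V) * (4 * ?d)" using F by (simp add: divide_le_eq)
    also have "\<dots> \<le> (2 * M + V) * (4 * (2 * M))"
    proof (rule mult_left_mono)
      show "4 * ?d \<le> 4 * (2 * M)" using F by simp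
      have "V \<ge> 0" unfolding V_def using e(1) by simp
      then show "0 \<le> 2 * M + V" using M by simp
    qed
    finally have w2: "(w i)\<^sup>2 \<le> A" unfolding A_def by (simp add: algebra_simps)
    have "\<bar>w i\<bar> \<le> A + 1"
    proof (cases "\<bar>w i\<bar> \<le> 1")
      case True then show ?thesis using w2 by (smt (verit) zero_le_power2)
    next
      case False
      then have "\<bar>w i\<bar> * 1 \<le> \<bar>w i\<bar> * \<bar>w i\<bar>" by (intro mult_left_mono) auto
      then have "\<bar>w i\<bar> \<le> \<bar>w i\<bar> * \<bar>w i\<bar>" by simp
      also have "\<dots> = (w i)\<^sup>2" by (simp add: power2_eq_square abs_mult_self_eq)
      finally show ?thesis using w2 by simp
    qed
    moreover have "A \<ge> 0" unfolding A_def V_def using M e(1) by simp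
    moreover have "V \<ge> 0" unfolding V_def using e(1) by simp
    ultimately show "\<bar>u1 i\<bar> \<le> V + A + 1 \<and> \<bar>u2 i\<bar> \<le> V + A + 1 \<and> \<bar>w i\<bar> \<le> V + A + 1"
      using c1 c2 nv by linarith
  qed
  then show ?thesis by blast
qed

lemma geom_bound:
  assumes X: "finite X" and Xint: "X - frontier \<Omega> \<subseteq> interior (convex hull (X \<inter> frontier \<Omega>))"
    and chi: "bij_betw chi {..<n} (X - frontier \<Omega>)"
    and pairs: "bij_betw (\<lambda>k. {cm k, cp k}) {..<m} {{a, b} | a b. a \<in> X \<and> b \<in> X \<and> a \<noteq> b}"
  shows "\<exists>R. \<forall>u1 u2 w. (\<forall>k<m. g u1 u2 w k \<le> 0) \<longrightarrow> (\<forall>i<n. \<bar>u1 i\<bar> \<le> R \<and> \<bar>u2 i\<bar> \<le> R \<and> \<bar>w i\<bar> \<le> R)"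
proof -
  have "\<forall>i. \<exists>Ri. i < n \<longrightarrow> (\<forall>u1 u2 w. (\<forall>k<m. g u1 u2 w k \<le> 0) \<longrightarrow> \<bar>u1 i\<bar> \<le> Ri \<and> \<bar>u2 i\<bar> \<le> Ri \<and> \<bar>w i\<bar> \<le> Ri)"
    using node_bound[OF X Xint chi pairs] by blast
  then obtain Rf where Rf: "\<And>i. i < n \<Longrightarrow> (\<forall>u1 u2 w. (\<forall>k<m. g u1 u2 w k \<le> 0) \<longrightarrow> \<bar>u1 i\<bar> \<le> Rf i \<and> \<bar>u2 i\<bar> \<le> Rf i \<and> \<bar>w i\<bar> \<le> Rf i)"
    by metis
  define R where "R = (\<Sum>i<n. \<bar>Rf i\<bar>)"
  have le: "Rf i \<le> R" if "i < n" for i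
  proof -
    have "\<bar>Rf i\<bar> \<le> R" unfolding R_def by (rule member_le_sum) (use that in auto)
    then show ?thesis by simp
  qed
  show ?thesis
  proof (intro exI allI impI)
    fix u1 u2 w i assume "\<forall>k<m. g u1 u2 w k \<le> 0" "i < n"
    then show "\<bar>u1 i\<bar> \<le> R \<and> \<bar>u2 i\<bar> \<le> R \<and> \<bar>w i\<bar> \<le> R"
      using Rf[of i] le[of i] by force
  qed
qed

end

theorem theorem6p1:
  fixes \<Omega> X :: "(real^2) set"
    and n m :: nat
    and chi cm cp :: "nat \<Rightarrow> real^2"
    and f :: "nat \<Rightarrow> real"
  assumes dom: "open \<Omega>" "connected \<Omega>" "bounded \<Omega>" "\<Omega> \<noteq> {}"
    and X: "finite X" "X \<subseteq> closure \<Omega>"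
    and Xint: "X - frontier \<Omega> \<subseteq> interior (convex hull (X \<inter> frontier \<Omega>))"
    and chi: "bij_betw chi {..<n} (X - frontier \<Omega>)"
    and pairs: "bij_betw (\<lambda>k. {cm k, cp k}) {..<m} {{a, b} | a b. a \<in> X \<and> b \<in> X \<and> a \<noteq> b}"
  shows "(\<exists>Z. (\<exists>s r q. primal_sol n m chi cm cp f s r q \<and> primal_obj m cm cp s r = Z) \<and>
              (\<exists>u1 u2 w t1 t2 t3. dual_sol n m chi cm cp f u1 u2 w t1 t2 t3 \<and> dual_obj n f w = Z))
     \<and> (\<forall>s q u1 u2 w. (\<forall>k<m. s k \<ge> 0) \<longrightarrow>
          (((\<exists>r. primal_sol n m chi cm cp f s r q) \<and>
            (\<exists>t1 t2 t3. dual_sol n m chi cm cp f u1 u2 w t1 t2 t3))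
           \<longleftrightarrow>
           ((\<forall>k<m. (1/4) * (mv (Dmat chi cm cp) n w k)\<^sup>2 / len cm cp k
                      + (mv (B1mat chi cm cp) n u1 k + mv (B2mat chi cm cp) n u2 k) \<le> len cm cp k) \<and>
            (\<forall>i<n. tmv (B1mat chi cm cp) m s i = 0 \<and> tmv (B2mat chi cm cp) m s i = 0 \<and>
                   tmv (Dmat chi cm cp) m q i = f i) \<and>
            (\<forall>k<m. s k \<noteq> 0 \<longrightarrow> (1/4) * (mv (Dmat chi cm cp) n w k)\<^sup>2 / len cm cp k
                      + (mv (B1mat chi cm cp) n u1 k + mv (B2mat chi cm cp) n u2 k) = len cm cp k) \<and>
            (\<forall>k<m. q k = (1/2) * s k * mv (Dmat chi cm cp) n w k / len cm cp k))))"
proof -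
  have lpos: "len cm cp k > 0" if k: "k < m" for k
  proof -
    have "{cm k, cp k} \<in> {{a, b} | a b. a \<in> X \<and> b \<in> X \<and> a \<noteq> b}"
      using pairs k unfolding bij_betw_def by blast
    then obtain a b where ab: "{cm k, cp k} = {a, b}" "a \<noteq> b" by blast
    have "cm k \<noteq> cp k"
    proof
      assume "cm k = cp k"
      then have "{a, b} = {cp k}" using ab(1) by simp
      then have "a \<in> {cp k}" "b \<in> {cp k}" by blast+
      then show False using ab(2) by simp
    qed
    then show ?thesis unfolding len_def by simp
  qed
  interpret setting n m chi cm cp f
    by unfold_locales (rule lpos)
  have bnd: "\<exists>R. \<forall>u1 u2 w. (\<forall>k<m. g u1 u2 w k \<le> 0) \<longrightarrow> (\<forall>i<n. \<bar>u1 i\<bar> \<le> R \<and> \<bar>u2 i\<bar> \<le> R \<and> \<bar>w i\<bar> \<le> R)"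
    by (rule geom_bound[OF X(1) Xint chi pairs])
  interpret setting2 n m chi cm cp f
    by unfold_locales (rule bnd)
  show ?thesis by (rule main_from_kkt[OF kkt_exists])
qed

end
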